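(* Let $\mathsf{C}$ be a depth-$D$ Clifford circuit on $n$ qubits consisting only of one- and two-qubit Clifford unitaries, and let $F$ be local stochastic Pauli noise of strength $p$ on $\mathsf{C}$. Then there is local stochastic Pauli noise $F'$ on $\mathsf{C}$ of strength $$p'=D\cdot\big(2p^{2^{-(D-1)}}\big)^{1/D}$$ such that (i) $\mathrm{supp}(F')\subseteq\{D\}\times[n]$ and (ii) $F\bowtie\mathsf{C}=F'\bowtie\mathsf{C}$.
   Context: Wires of a depth-$D$ circuit on $n$ qubits: $\mathcal{W}_{\mathsf{C}}=[D]\times[n]$, with $(t,j)$ representing qubit $j$ after layer $t$. Local stochastic Pauli noise of strength $p$: a random function $F:\mathcal{W}_{\mathsf{C}}\to\mathcal{P}_1$ (single-qubit Paulis) with $\Pr[W\subseteq\mathrm{supp}(F)]\le p^{|W|}$ for all $W\subseteq\mathcal{W}_{\mathsf{C}}$, where $\mathrm{supp}(F)=\{w:F(w)\not\propto I\}$. $F\bowtie\mathsf{C}$ denotes the noisy execution in which $F(t,j)$ is applied to qubit $j$ right after layer $t$. *)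

theory Defs
  imports "HOL-Probability.Probability" "Jordan_Normal_Form.Matrix"
begin

text \<open>An operator on n qubits is a complex 2^n x 2^n matrix. Computational basis index i
  encodes qubit l in its l-th binary digit, qubits are numbered 0..n-1.\<close>

definition qbit :: "nat \<Rightarrow> nat \<Rightarrow> nat" where
  "qbit l i = (i div 2 ^ l) mod 2"

definition local_index :: "nat list \<Rightarrow> nat \<Rightarrow> nat" where
  "local_index qs i = (\<Sum>m<length qs. 2 ^ m * qbit (qs ! m) i)"

text \<open>Embedding of a (2^k x 2^k) operator U acting on the qubit list qs (length k)
  into the n-qubit space (tensor product with identity on the remaining qubits).\<close>
definition embed :: "nat \<Rightarrow> nat list \<Rightarrow> complex mat \<Rightarrow> complex mat" where
  "embed n qs U = mat (2 ^ n) (2 ^ n)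
     (\<lambda>(i, k). if (\<forall>l<n. l \<notin> set qs \<longrightarrow> qbit l i = qbit l k)
               then U $$ (local_index qs i, local_index qs k) else 0)"

definition adj :: "complex mat \<Rightarrow> complex mat" where
  "adj U = mat (dim_col U) (dim_row U) (\<lambda>(i, j). cnj (U $$ (j, i)))"

definition prod_mats :: "nat \<Rightarrow> complex mat list \<Rightarrow> complex mat" where
  "prod_mats d Ms = foldr (\<lambda>A B. A * B) Ms (1\<^sub>m d)"

definition pauliI :: "complex mat" where "pauliI = 1\<^sub>m 2"
definition pauliX :: "complex mat" where "pauliX = mat_of_rows_list 2 [[0, 1], [1, 0]]"
definition pauliY :: "complex mat" where "pauliY = mat_of_rows_list 2 [[0, -\<i>], [\<i>, 0]]"
definition pauliZ :: "complex mat" where "pauliZ = mat_of_rows_list 2 [[1, 0], [0, -1]]"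

definition phases :: "complex set" where "phases = {1, -1, \<i>, -\<i>}"

definition pauli_basis :: "complex mat set" where
  "pauli_basis = {pauliI, pauliX, pauliY, pauliZ}"

definition pauli_group :: "nat \<Rightarrow> complex mat set" where
  "pauli_group k = {c \<cdot>\<^sub>m prod_mats (2 ^ k) (map (\<lambda>m. embed k [m] (\<sigma>s ! m)) [0..<k]) | c \<sigma>s.
        c \<in> phases \<and> length \<sigma>s = k \<and> set \<sigma>s \<subseteq> pauli_basis}"

definition pauli1 :: "complex mat set" where
  "pauli1 = {c \<cdot>\<^sub>m \<sigma> | c \<sigma>. c \<in> phases \<and> \<sigma> \<in> pauli_basis}"

definition unitary_mat :: "nat \<Rightarrow> complex mat \<Rightarrow> bool" where
  "unitary_mat d U \<longleftrightarrow> U \<in> carrier_mat d d \<and> U * adj U = 1\<^sub>m d"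

definition clifford :: "nat \<Rightarrow> complex mat \<Rightarrow> bool" where
  "clifford k U \<longleftrightarrow> unitary_mat (2 ^ k) U \<and>
     (\<forall>P \<in> pauli_group k. U * P * adj U \<in> pauli_group k)"

text \<open>A gate is a list of distinct target qubits together with a unitary on them;
  a layer is a list of gates on pairwise disjoint qubits; a depth-D circuit is a list of D layers.\<close>
type_synonym gate = "nat list \<times> complex mat"
type_synonym layer = "gate list"
type_synonym circuit = "layer list"

definition valid_gate_12 :: "nat \<Rightarrow> gate \<Rightarrow> bool" where
  "valid_gate_12 n g \<longleftrightarrow> (case g of (qs, U) \<Rightarrow>
      distinct qs \<and> set qs \<subseteq> {0..<n} \<and> length qs \<in> {1, 2} \<and> clifford (length qs) U)"

definition valid_layer :: "nat \<Rightarrow> layer \<Rightarrow> bool" where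
  "valid_layer n L \<longleftrightarrow> (\<forall>g \<in> set L. valid_gate_12 n g) \<and>
     (\<forall>a<length L. \<forall>b<length L. a \<noteq> b \<longrightarrow> set (fst (L ! a)) \<inter> set (fst (L ! b)) = {})"

definition clifford_circuit_12 :: "nat \<Rightarrow> nat \<Rightarrow> circuit \<Rightarrow> bool" where
  "clifford_circuit_12 D n C \<longleftrightarrow> length C = D \<and> (\<forall>L \<in> set C. valid_layer n L)"

definition layer_op :: "nat \<Rightarrow> layer \<Rightarrow> complex mat" where
  "layer_op n L = prod_mats (2 ^ n) (map (\<lambda>(qs, U). embed n qs U) L)"

text \<open>Wires (t, j): qubit j after layer t, t \<in> [D] = \{1..D\}, j \<in> \{0..<n\}.\<close>
definition wires :: "nat \<Rightarrow> nat \<Rightarrow> (nat \<times> nat) set" where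
  "wires D n = {1..D} \<times> {0..<n}"

type_synonym noise = "nat \<times> nat \<Rightarrow> complex mat"

definition pauli_noise :: "nat \<Rightarrow> nat \<Rightarrow> noise \<Rightarrow> bool" where
  "pauli_noise D n f \<longleftrightarrow> (\<forall>w \<in> wires D n. f w \<in> pauli1)"

definition supp :: "nat \<Rightarrow> nat \<Rightarrow> noise \<Rightarrow> (nat \<times> nat) set" where
  "supp D n f = {w \<in> wires D n. \<not> (\<exists>c. f w = c \<cdot>\<^sub>m 1\<^sub>m 2)}"

definition local_stochastic :: "'\<omega> pmf \<Rightarrow> nat \<Rightarrow> nat \<Rightarrow> real \<Rightarrow> ('\<omega> \<Rightarrow> noise) \<Rightarrow> bool" where
  "local_stochastic M D n p F \<longleftrightarrow> (\<forall>\<omega>. pauli_noise D n (F \<omega>)) \<and>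
     (\<forall>W \<subseteq> wires D n. measure_pmf.prob M {\<omega>. W \<subseteq> supp D n (F \<omega>)} \<le> p ^ card W)"

text \<open>Noisy execution F \<bowtie> C: the Pauli F(t,j) is applied to qubit j right after layer t.\<close>
definition noise_layer :: "nat \<Rightarrow> noise \<Rightarrow> nat \<Rightarrow> complex mat" where
  "noise_layer n f t = prod_mats (2 ^ n) (map (\<lambda>j. embed n [j] (f (t, j))) [0..<n])"

fun noisy_exec_aux :: "nat \<Rightarrow> noise \<Rightarrow> nat \<Rightarrow> circuit \<Rightarrow> complex mat" where
  "noisy_exec_aux n f t [] = 1\<^sub>m (2 ^ n)"
| "noisy_exec_aux n f t (L # Ls) =
     noisy_exec_aux n f (Suc t) Ls * (noise_layer n f t * layer_op n L)"

definition noisy_exec :: "nat \<Rightarrow> circuit \<Rightarrow> noise \<Rightarrow> complex mat" where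
  "noisy_exec n C f = noisy_exec_aux n f 1 C"

end

theory Submission
  imports Defs "Jordan_Normal_Form.Determinant"
begin

section \<open>Pauli basics\<close>

definition sc :: "complex mat \<Rightarrow> bool" where
  "sc a \<longleftrightarrow> (\<exists>c. a = c \<cdot>\<^sub>m 1\<^sub>m 2)"

lemma smult_one_mat[simp]: "1 \<cdot>\<^sub>m (A :: complex mat) = A"
  by (rule eq_matI) auto

lemma smult_smult_mat[simp]: "a \<cdot>\<^sub>m (b \<cdot>\<^sub>m (A :: complex mat)) = (a * b) \<cdot>\<^sub>m A"
  by (rule eq_matI) auto

lemma smult_mult_smult:
  assumes "A \<in> carrier_mat n m" "B \<in> carrier_mat m k"
  shows "(a \<cdot>\<^sub>m A) * (b \<cdot>\<^sub>m B) = (a * b) \<cdot>\<^sub>m (A * (B :: complex mat))"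
proof -
  have "(a \<cdot>\<^sub>m A) * (b \<cdot>\<^sub>m B) = a \<cdot>\<^sub>m (A * (b \<cdot>\<^sub>m B))"
    using assms by (intro mult_smult_assoc_mat[of A n m "b \<cdot>\<^sub>m B" k]) auto
  also have "\<dots> = a \<cdot>\<^sub>m (b \<cdot>\<^sub>m (A * B))" using assms by (simp add: mult_smult_distrib)
  finally show ?thesis by simp
qed

lemma pauli_basis_carrier: "\<sigma> \<in> pauli_basis \<Longrightarrow> \<sigma> \<in> carrier_mat 2 2"
  by (auto simp: pauli_basis_def pauliI_def pauliX_def pauliY_def pauliZ_def mat_of_rows_list_def)

lemma pauli1_carrier: "a \<in> pauli1 \<Longrightarrow> a \<in> carrier_mat 2 2"
  by (auto simp: pauli1_def dest: pauli_basis_carrier)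

lemma phases_mult: "c \<in> phases \<Longrightarrow> d \<in> phases \<Longrightarrow> c * d \<in> phases"
  by (auto simp: phases_def)

lemma one_phases: "1 \<in> phases" by (simp add: phases_def)

lemma prod_list_phases: "\<forall>x\<in>set xs. f x \<in> phases \<Longrightarrow> prod_list (map f xs) \<in> phases"
  by (induction xs) (auto simp: one_phases phases_mult)

lemmas pmdefs = pauliI_def pauliX_def pauliY_def pauliZ_def mat_of_rows_list_def scalar_prod_def less_Suc_eq numeral_2_eq_2

lemma basis_mult:
  assumes "\<sigma> \<in> pauli_basis" "\<tau> \<in> pauli_basis"
  shows "\<exists>c \<rho>. c \<in> phases \<and> \<rho> \<in> pauli_basis \<and> \<sigma> * \<tau> = c \<cdot>\<^sub>m \<rho>"
proof -
  have I1: "pauliI * x = 1 \<cdot>\<^sub>m x" if "x \<in> pauli_basis" for x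
    using pauli_basis_carrier[OF that] by (simp add: pauliI_def)
  have I2: "x * pauliI = 1 \<cdot>\<^sub>m x" if "x \<in> pauli_basis" for x
    using pauli_basis_carrier[OF that] by (simp add: pauliI_def)
  have "pauliX * pauliX = 1 \<cdot>\<^sub>m pauliI" by (rule eq_matI) (auto simp: pmdefs)
  moreover have "pauliY * pauliY = 1 \<cdot>\<^sub>m pauliI" by (rule eq_matI) (auto simp: pmdefs)
  moreover have "pauliZ * pauliZ = 1 \<cdot>\<^sub>m pauliI" by (rule eq_matI) (auto simp: pmdefs)
  moreover have "pauliX * pauliY = \<i> \<cdot>\<^sub>m pauliZ" by (rule eq_matI) (auto simp: pmdefs)
  moreover have "pauliY * pauliX = (-\<i>) \<cdot>\<^sub>m pauliZ" by (rule eq_matI) (auto simp: pmdefs)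
  moreover have "pauliY * pauliZ = \<i> \<cdot>\<^sub>m pauliX" by (rule eq_matI) (auto simp: pmdefs)
  moreover have "pauliZ * pauliY = (-\<i>) \<cdot>\<^sub>m pauliX" by (rule eq_matI) (auto simp: pmdefs)
  moreover have "pauliZ * pauliX = \<i> \<cdot>\<^sub>m pauliY" by (rule eq_matI) (auto simp: pmdefs)
  moreover have "pauliX * pauliZ = (-\<i>) \<cdot>\<^sub>m pauliY" by (rule eq_matI) (auto simp: pmdefs)
  ultimately have P: "pauliX * pauliX = 1 \<cdot>\<^sub>m pauliI" "pauliY * pauliY = 1 \<cdot>\<^sub>m pauliI"
    "pauliZ * pauliZ = 1 \<cdot>\<^sub>m pauliI" "pauliX * pauliY = \<i> \<cdot>\<^sub>m pauliZ"
    "pauliY * pauliX = (-\<i>) \<cdot>\<^sub>m pauliZ" "pauliY * pauliZ = \<i> \<cdot>\<^sub>m pauliX"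
    "pauliZ * pauliY = (-\<i>) \<cdot>\<^sub>m pauliX" "pauliZ * pauliX = \<i> \<cdot>\<^sub>m pauliY"
    "pauliX * pauliZ = (-\<i>) \<cdot>\<^sub>m pauliY" by auto
  have ph: "1 \<in> phases" "\<i> \<in> phases" "-\<i> \<in> phases" by (auto simp: phases_def)
  have b: "pauliI \<in> pauli_basis" "pauliX \<in> pauli_basis" "pauliY \<in> pauli_basis" "pauliZ \<in> pauli_basis"
    by (auto simp: pauli_basis_def)
  have H: "\<And>c \<rho>. c \<in> phases \<Longrightarrow> \<rho> \<in> pauli_basis \<Longrightarrow> \<sigma> * \<tau> = c \<cdot>\<^sub>m \<rho> \<Longrightarrow> ?thesis" by blast
  from assms(1) have "\<sigma> = pauliI \<or> \<sigma> = pauliX \<or> \<sigma> = pauliY \<or> \<sigma> = pauliZ" by (auto simp: pauli_basis_def)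
  moreover from assms(2) have "\<tau> = pauliI \<or> \<tau> = pauliX \<or> \<tau> = pauliY \<or> \<tau> = pauliZ" by (auto simp: pauli_basis_def)
  ultimately show ?thesis
  proof (elim disjE)
  qed (rule H, rule ph, rule b, use P I1 I2 b in simp; fail)+
qed

lemma pauli1_mult:
  assumes "a \<in> pauli1" "b \<in> pauli1" shows "a * b \<in> pauli1"
proof -
  obtain c1 \<sigma> where 1: "c1 \<in> phases" "\<sigma> \<in> pauli_basis" "a = c1 \<cdot>\<^sub>m \<sigma>" using assms(1) by (auto simp: pauli1_def)
  obtain c2 \<tau> where 2: "c2 \<in> phases" "\<tau> \<in> pauli_basis" "b = c2 \<cdot>\<^sub>m \<tau>" using assms(2) by (auto simp: pauli1_def)
  obtain c \<rho> where 3: "c \<in> phases" "\<rho> \<in> pauli_basis" "\<sigma> * \<tau> = c \<cdot>\<^sub>m \<rho>" using basis_mult[OF 1(2) 2(2)] by blast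
  have s: "\<sigma> \<in> carrier_mat 2 2" "\<tau> \<in> carrier_mat 2 2" using 1 2 pauli_basis_carrier by auto
  have "a * b = (c1 * c2) \<cdot>\<^sub>m (\<sigma> * \<tau>)"
    using s by (simp add: 1 2 smult_mult_smult)
  also have "\<dots> = (c1 * c2 * c) \<cdot>\<^sub>m \<rho>" by (simp add: 3)
  finally show ?thesis using 1 2 3 by (auto simp: pauli1_def intro!: phases_mult)
qed

lemma sc_mult: "sc a \<Longrightarrow> sc b \<Longrightarrow> sc (a * b)"
  unfolding sc_def by (auto simp: smult_mult_smult[of _ 2 2 _ 2])

lemma one_pauli1: "1\<^sub>m 2 \<in> pauli1"
  unfolding pauli1_def pauli_basis_def pauliI_def
  by (rule CollectI, rule exI[of _ 1], rule exI[of _ "1\<^sub>m 2"]) (auto simp: one_phases)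

lemma sc_one: "sc (1\<^sub>m 2)"
  unfolding sc_def by (rule exI[of _ 1]) simp

fun fb :: "nat \<Rightarrow> (nat \<Rightarrow> nat) \<Rightarrow> nat" where
  "fb 0 \<beta> = 0"
| "fb (Suc n) \<beta> = \<beta> 0 + 2 * fb n (\<lambda>j. \<beta> (Suc j))"

lemma fb_sum: "fb n \<beta> = (\<Sum>j<n. 2 ^ j * \<beta> j)"
proof (induction n arbitrary: \<beta>)
  case 0 then show ?case by simp
next
  case (Suc n)
  show ?case by (simp add: Suc sum.lessThan_Suc_shift sum_distrib_left mult.assoc del: sum.lessThan_Suc)
qed

lemma fb_cong: "(\<And>j. j < n \<Longrightarrow> \<beta> j = \<beta>' j) \<Longrightarrow> fb n \<beta> = fb n \<beta>'"
  unfolding fb_sum by (rule sum.cong) auto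

lemma qbit_less: "qbit l i < 2" by (simp add: qbit_def)

lemma qbit_0: "qbit 0 x = x mod 2" by (simp add: qbit_def)
lemma qbit_Suc: "qbit (Suc j) x = qbit j (x div 2)"
  by (simp add: qbit_def div_mult2_eq)

lemma fb_less: "(\<And>j. j < n \<Longrightarrow> \<beta> j < 2) \<Longrightarrow> fb n \<beta> < 2 ^ n"
proof (induction n arbitrary: \<beta>)
  case 0 then show ?case by simp
next
  case (Suc n)
  have "fb n (\<lambda>j. \<beta> (Suc j)) < 2 ^ n" using Suc by auto
  moreover have "\<beta> 0 < 2" using Suc by auto
  ultimately show ?case by simp
qed

lemma qbit_fb: "(\<And>j. j < n \<Longrightarrow> \<beta> j < 2) \<Longrightarrow> j < n \<Longrightarrow> qbit j (fb n \<beta>) = \<beta> j"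
proof (induction n arbitrary: \<beta> j)
  case 0 then show ?case by simp
next
  case (Suc n)
  have b0: "\<beta> 0 < 2" using Suc by auto
  show ?case
  proof (cases j)
    case 0 then show ?thesis using b0 by (simp add: qbit_0)
  next
    case (Suc j')
    have "(\<beta> 0 + 2 * fb n (\<lambda>j. \<beta> (Suc j))) div 2 = fb n (\<lambda>j. \<beta> (Suc j))" using b0 by simp
    then show ?thesis using Suc.IH[of "\<lambda>j. \<beta> (Suc j)" j'] Suc.prems Suc by (simp add: qbit_Suc)
  qed
qed

lemma fb_qbit: "i < 2 ^ n \<Longrightarrow> fb n (\<lambda>j. qbit j i) = i"
proof (induction n arbitrary: i)
  case 0 then show ?case by simp
next
  case (Suc n)
  have "i div 2 < 2 ^ n" using Suc.prems by auto
  then have "fb n (\<lambda>j. qbit j (i div 2)) = i div 2" using Suc.IH by blast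
  then show ?case by (simp add: qbit_Suc qbit_0)
qed

lemma bits_eq: "i < 2 ^ n \<Longrightarrow> k < 2 ^ n \<Longrightarrow> (\<And>j. j < n \<Longrightarrow> qbit j i = qbit j k) \<Longrightarrow> i = k"
  by (metis fb_qbit fb_cong)

lemma li_fb: "local_index qs i = fb (length qs) (\<lambda>m. qbit (qs ! m) i)"
  by (simp add: local_index_def fb_sum)

lemma li_less: "local_index qs i < 2 ^ length qs"
  unfolding li_fb by (rule fb_less) (simp add: qbit_less)

lemma qbit_li: "m < length qs \<Longrightarrow> qbit m (local_index qs i) = qbit (qs ! m) i"
  unfolding li_fb by (rule qbit_fb) (auto simp: qbit_less)

lemma li_single: "local_index [j] i = qbit j i"
  by (simp add: local_index_def)

definition agree :: "nat \<Rightarrow> nat set \<Rightarrow> nat \<Rightarrow> nat \<Rightarrow> bool" where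
  "agree n S i k \<longleftrightarrow> (\<forall>l<n. l \<notin> S \<longrightarrow> qbit l i = qbit l k)"

definition idx :: "nat list \<Rightarrow> nat \<Rightarrow> nat" where
  "idx qs j = (THE m. m < length qs \<and> qs ! m = j)"

lemma idx_nth: "distinct qs \<Longrightarrow> m < length qs \<Longrightarrow> idx qs (qs ! m) = m"
  unfolding idx_def by (rule the_equality) (auto simp: nth_eq_iff_index_eq)

lemma idx_props: "distinct qs \<Longrightarrow> j \<in> set qs \<Longrightarrow> idx qs j < length qs \<and> qs ! idx qs j = j"
  by (metis idx_nth in_set_conv_nth)

lemma embed_carrier[simp]: "embed n qs U \<in> carrier_mat (2^n) (2^n)"
  by (simp add: embed_def)

lemma embed_dims[simp]: "dim_row (embed n qs U) = 2^n" "dim_col (embed n qs U) = 2^n"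
  by (simp_all add: embed_def)

lemma embed_index: "i < 2^n \<Longrightarrow> k < 2^n \<Longrightarrow>
  embed n qs U $$ (i,k) = (if agree n (set qs) i k then U $$ (local_index qs i, local_index qs k) else 0)"
  by (simp add: embed_def agree_def)

lemma mult_index_sum: "A \<in> carrier_mat d d \<Longrightarrow> B \<in> carrier_mat d d \<Longrightarrow> i < d \<Longrightarrow> k < d \<Longrightarrow>
  (A * B) $$ (i,k) = (\<Sum>l\<in>{0..<d}. A $$ (i,l) * B $$ (l,k))"
  by (simp add: scalar_prod_def)

lemma E1:
  assumes d: "distinct qs" and s: "set qs \<subseteq> {0..<n}"
    and U: "U \<in> carrier_mat (2^length qs) (2^length qs)" and V: "V \<in> carrier_mat (2^length qs) (2^length qs)"
  shows "embed n qs U * embed n qs V = embed n qs (U * V)"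
proof (rule eq_matI)
  fix i k assume "i < dim_row (embed n qs (U*V))" and "k < dim_col (embed n qs (U*V))"
  then have i: "i < 2^n" and k: "k < 2^n" by auto
  let ?K = "length qs"
  define g where "g a = fb n (\<lambda>j. if j \<in> set qs then qbit (idx qs j) a else qbit j i)" for a
  have g_bits: "qbit j (g a) = (if j \<in> set qs then qbit (idx qs j) a else qbit j i)" if "j < n" for j a
    unfolding g_def by (rule qbit_fb) (auto simp: qbit_less that)
  have g_less: "g a < 2^n" for a unfolding g_def by (rule fb_less) (auto simp: qbit_less)
  have li_g: "local_index qs (g a) = a" if "a < 2^?K" for a
  proof -
    have "local_index qs (g a) = fb ?K (\<lambda>m. qbit m a)"
      unfolding li_fb
    proof (rule fb_cong)
      fix m assume m: "m < ?K"
      then have q: "qs ! m \<in> set qs" by simp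
      then have "qs ! m < n" using s by auto
      then show "qbit (qs ! m) (g a) = qbit m a" using g_bits q m d by (simp add: idx_nth)
    qed
    also have "\<dots> = a" using fb_qbit that by blast
    finally show ?thesis .
  qed
  have g_agree: "agree n (set qs) i (g a)" for a using g_bits by (simp add: agree_def)
  have img: "{l \<in> {0..<2^n}. agree n (set qs) i l} = g ` {0..<2^?K}"
  proof (intro equalityI subsetI)
    fix l assume "l \<in> {l \<in> {0..<2^n}. agree n (set qs) i l}"
    then have l: "l < 2^n" "agree n (set qs) i l" by auto
    have "l = g (local_index qs l)"
    proof (rule bits_eq[OF l(1) g_less])
      fix j assume j: "j < n"
      show "qbit j l = qbit j (g (local_index qs l))"
      proof (cases "j \<in> set qs")
        case True
        then have "idx qs j < ?K" "qs ! idx qs j = j" using idx_props d by auto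
        then show ?thesis using True g_bits[OF j] qbit_li[of "idx qs j" qs l] by simp
      next
        case False then show ?thesis using g_bits[OF j] l(2) j by (simp add: agree_def)
      qed
    qed
    then show "l \<in> g ` {0..<2^?K}" using li_less[of qs l] by auto
  next
    fix l assume "l \<in> g ` {0..<2^?K}"
    then show "l \<in> {l \<in> {0..<2^n}. agree n (set qs) i l}" using g_less g_agree by auto
  qed
  have inj: "inj_on g {0..<2^?K}" by (rule inj_on_inverseI[where g = "local_index qs"]) (simp add: li_g)
  have eU: "embed n qs U \<in> carrier_mat (2^n) (2^n)" "embed n qs V \<in> carrier_mat (2^n) (2^n)" by auto
  show "(embed n qs U * embed n qs V) $$ (i,k) = embed n qs (U*V) $$ (i,k)"
  proof (cases "agree n (set qs) i k")
    case True
    have "(embed n qs U * embed n qs V) $$ (i,k) = (\<Sum>l\<in>{0..<2^n}. embed n qs U $$ (i,l) * embed n qs V $$ (l,k))"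
      by (rule mult_index_sum[OF eU i k])
    also have "\<dots> = (\<Sum>l\<in>{l \<in> {0..<2^n}. agree n (set qs) i l}. U $$ (local_index qs i, local_index qs l) * V $$ (local_index qs l, local_index qs k))"
      by (rule sum.mono_neutral_cong_right) (use True in \<open>auto simp: embed_index i k agree_def\<close>)
    also have "\<dots> = (\<Sum>a\<in>{0..<2^?K}. U $$ (local_index qs i, a) * V $$ (a, local_index qs k))"
      unfolding img by (simp add: sum.reindex[OF inj] li_g)
    also have "\<dots> = (U*V) $$ (local_index qs i, local_index qs k)"
      by (rule mult_index_sum[OF U V li_less li_less, symmetric])
    finally show ?thesis using True i k by (simp add: embed_index)
  next
    case False
    have "(embed n qs U * embed n qs V) $$ (i,k) = (\<Sum>l\<in>{0..<2^n}. embed n qs U $$ (i,l) * embed n qs V $$ (l,k))"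
      by (rule mult_index_sum[OF eU i k])
    also have "\<dots> = 0"
      by (rule sum.neutral) (use False in \<open>auto simp: embed_index i k agree_def\<close>)
    finally show ?thesis using False i k by (simp add: embed_index)
  qed
qed auto

lemma embed_mult_disj:
  assumes dq: "set qs \<subseteq> {0..<n}" and dr: "set rs \<subseteq> {0..<n}"
   and disj: "set qs \<inter> set rs = {}"
  shows "embed n qs X * embed n rs Y = mat (2^n) (2^n) (\<lambda>(i,k). if agree n (set qs \<union> set rs) i k
      then X $$ (local_index qs i, local_index qs k) * Y $$ (local_index rs i, local_index rs k) else 0)"
proof (rule eq_matI)
  fix i k assume "i < dim_row (mat (2^n) (2^n) (\<lambda>(i,k). if agree n (set qs \<union> set rs) i k
      then X $$ (local_index qs i, local_index qs k) * Y $$ (local_index rs i, local_index rs k) else 0))"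
    "k < dim_col (mat (2^n) (2^n) (\<lambda>(i,k). if agree n (set qs \<union> set rs) i k
      then X $$ (local_index qs i, local_index qs k) * Y $$ (local_index rs i, local_index rs k) else 0))"
  then have i: "i < 2^n" and k: "k < 2^n" by auto
  have eU: "embed n qs X \<in> carrier_mat (2^n) (2^n)" "embed n rs Y \<in> carrier_mat (2^n) (2^n)" by auto
  have S: "(embed n qs X * embed n rs Y) $$ (i,k) = (\<Sum>l\<in>{0..<2^n}. embed n qs X $$ (i,l) * embed n rs Y $$ (l,k))"
    by (rule mult_index_sum[OF eU i k])
  show "(embed n qs X * embed n rs Y) $$ (i,k) = mat (2^n) (2^n) (\<lambda>(i,k). if agree n (set qs \<union> set rs) i k
      then X $$ (local_index qs i, local_index qs k) * Y $$ (local_index rs i, local_index rs k) else 0) $$ (i,k)"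
  proof (cases "agree n (set qs \<union> set rs) i k")
    case True
    define h where "h = fb n (\<lambda>j. if j \<in> set qs then qbit j k else qbit j i)"
    have h_bits: "qbit j h = (if j \<in> set qs then qbit j k else qbit j i)" if "j < n" for j
      unfolding h_def by (rule qbit_fb) (auto simp: qbit_less that)
    have h_less: "h < 2^n" unfolding h_def by (rule fb_less) (auto simp: qbit_less)
    have uniq: "l = h" if "l < 2^n" "agree n (set qs) i l" "agree n (set rs) l k" for l
    proof (rule bits_eq[OF that(1) h_less])
      fix j assume j: "j < n"
      show "qbit j l = qbit j h"
        using that j h_bits[OF j] disj by (cases "j \<in> set qs") (auto simp: agree_def)
    qed
    have a1: "agree n (set qs) i h" using h_bits by (auto simp: agree_def)
    have a2: "agree n (set rs) h k" using h_bits True by (auto simp: agree_def)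
    have l1: "local_index qs h = local_index qs k" unfolding li_fb
    proof (rule fb_cong)
      fix m assume m: "m < length qs"
      then have "qs ! m \<in> set qs" by simp
      then show "qbit (qs ! m) h = qbit (qs ! m) k" using h_bits dq by auto
    qed
    have l2: "local_index rs h = local_index rs i" unfolding li_fb
    proof (rule fb_cong)
      fix m assume m: "m < length rs"
      then have r: "rs ! m \<in> set rs" by simp
      then have "rs ! m < n" "rs ! m \<notin> set qs" using dr disj by auto
      then show "qbit (rs ! m) h = qbit (rs ! m) i" using h_bits by simp
    qed
    have "(\<Sum>l\<in>{0..<2^n}. embed n qs X $$ (i,l) * embed n rs Y $$ (l,k)) =
          (\<Sum>l\<in>{h}. embed n qs X $$ (i,l) * embed n rs Y $$ (l,k))"
    proof (rule sum.mono_neutral_cong_right)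
      show "\<forall>l\<in>{0..<2^n} - {h}. embed n qs X $$ (i,l) * embed n rs Y $$ (l,k) = 0"
      proof
        fix l assume l: "l \<in> {0..<2^n} - {h}"
        then have "\<not> (agree n (set qs) i l \<and> agree n (set rs) l k)" using uniq by auto
        then show "embed n qs X $$ (i,l) * embed n rs Y $$ (l,k) = 0"
          using l i k by (simp add: embed_index)
      qed
    qed (use h_less in simp_all)
    also have "\<dots> = X $$ (local_index qs i, local_index qs k) * Y $$ (local_index rs i, local_index rs k)"
      using a1 a2 l1 l2 by (simp add: embed_index i k h_less)
    finally show ?thesis using S True i k by simp
  next
    case False
    have "\<forall>l\<in>{0..<2^n}. embed n qs X $$ (i,l) * embed n rs Y $$ (l,k) = 0"
    proof
      fix l :: nat assume l: "l \<in> {0..<2^n}"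
      have "\<not> (agree n (set qs) i l \<and> agree n (set rs) l k)"
      proof
        assume A: "agree n (set qs) i l \<and> agree n (set rs) l k"
        have "agree n (set qs \<union> set rs) i k" using A unfolding agree_def by auto
        with False show False by simp
      qed
      then show "embed n qs X $$ (i,l) * embed n rs Y $$ (l,k) = 0"
        using l i k by (simp add: embed_index)
    qed
    then have "(\<Sum>l\<in>{0..<2^n}. embed n qs X $$ (i,l) * embed n rs Y $$ (l,k)) = 0"
      by (rule sum.neutral)
    then show ?thesis using S False i k by simp
  qed
qed auto

lemma embed_commute:
  assumes dq: "set qs \<subseteq> {0..<n}" and dr: "set rs \<subseteq> {0..<n}"
   and disj: "set qs \<inter> set rs = {}"
  shows "embed n qs X * embed n rs Y = embed n rs Y * embed n qs X"
proof -
  have u: "set rs \<union> set qs = set qs \<union> set rs" by blast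
  have disj': "set rs \<inter> set qs = {}" using disj by blast
  show ?thesis
    unfolding embed_mult_disj[OF dq dr disj] embed_mult_disj[OF dr dq disj'] u
    by (rule eq_matI) (simp_all add: mult.commute)
qed

lemma E3:
  assumes d: "distinct qs" and s: "set qs \<subseteq> {0..<n}" and m: "m < length qs"
  shows "embed n qs (embed (length qs) [m] \<sigma>) = embed n [qs ! m] \<sigma>"
proof (rule eq_matI)
  fix i k assume "i < dim_row (embed n [qs ! m] \<sigma>)" "k < dim_col (embed n [qs ! m] \<sigma>)"
  then have i: "i < 2^n" and k: "k < 2^n" by auto
  have c: "(agree n (set qs) i k \<and> agree (length qs) {m} (local_index qs i) (local_index qs k))
     = agree n {qs ! m} i k"
  proof
    assume A: "agree n (set qs) i k \<and> agree (length qs) {m} (local_index qs i) (local_index qs k)"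
    show "agree n {qs ! m} i k" unfolding agree_def
    proof (intro allI impI)
      fix l assume l: "l < n" "l \<notin> {qs ! m}"
      show "qbit l i = qbit l k"
      proof (cases "l \<in> set qs")
        case True
        then obtain m' where m': "m' < length qs" "qs ! m' = l" by (auto simp: in_set_conv_nth)
        then have "m' \<noteq> m" using l by auto
        then show ?thesis using A m' qbit_li[of m' qs] by (auto simp: agree_def)
      next
        case False then show ?thesis using A l by (auto simp: agree_def)
      qed
    qed
  next
    assume A: "agree n {qs ! m} i k"
    have "agree n (set qs) i k" using A m d by (auto simp: agree_def)
    moreover have "agree (length qs) {m} (local_index qs i) (local_index qs k)"
      unfolding agree_def
    proof (intro allI impI)
      fix l assume l: "l < length qs" "l \<notin> {m}"
      then have "qs ! l \<noteq> qs ! m" "qs ! l < n" using d m s nth_eq_iff_index_eq nth_mem by fastforce+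
      then show "qbit l (local_index qs i) = qbit l (local_index qs k)"
        using A l by (simp add: qbit_li agree_def)
    qed
    ultimately show "agree n (set qs) i k \<and> agree (length qs) {m} (local_index qs i) (local_index qs k)" by blast
  qed
  have "embed n qs (embed (length qs) [m] \<sigma>) $$ (i,k) =
     (if agree n (set qs) i k then (if agree (length qs) {m} (local_index qs i) (local_index qs k)
        then \<sigma> $$ (qbit (qs ! m) i, qbit (qs ! m) k) else 0) else 0)"
    using m by (simp add: embed_index i k li_less li_single qbit_li)
  also have "\<dots> = embed n [qs ! m] \<sigma> $$ (i,k)"
    using c by (auto simp: embed_index i k li_single)
  finally show "embed n qs (embed (length qs) [m] \<sigma>) $$ (i,k) = embed n [qs ! m] \<sigma> $$ (i,k)" .
qed auto

lemma E4:
  assumes s: "set qs \<subseteq> {0..<n}"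
  shows "embed n qs (1\<^sub>m (2 ^ length qs)) = 1\<^sub>m (2^n)"
proof (rule eq_matI)
  fix i k assume "i < dim_row (1\<^sub>m (2^n) :: complex mat)" "k < dim_col (1\<^sub>m (2^n) :: complex mat)"
  then have i: "i < 2^n" and k: "k < 2^n" by auto
  have "(agree n (set qs) i k \<and> local_index qs i = local_index qs k) = (i = k)"
  proof
    assume A: "agree n (set qs) i k \<and> local_index qs i = local_index qs k"
    show "i = k"
    proof (rule bits_eq[OF i k])
      fix j assume j: "j < n"
      show "qbit j i = qbit j k"
      proof (cases "j \<in> set qs")
        case True
        then obtain m where m: "m < length qs" "qs ! m = j" by (auto simp: in_set_conv_nth)
        then show ?thesis using A qbit_li[OF m(1), of i] qbit_li[OF m(1), of k] by simp
      next
        case False then show ?thesis using A j by (auto simp: agree_def)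
      qed
    qed
  qed (auto simp: agree_def)
  then show "embed n qs (1\<^sub>m (2 ^ length qs)) $$ (i,k) = 1\<^sub>m (2^n) $$ (i,k)"
    by (auto simp: embed_index i k li_less)
qed auto

lemma E5:
  assumes "X \<in> carrier_mat (2 ^ length qs) (2 ^ length qs)"
  shows "embed n qs (c \<cdot>\<^sub>m X) = c \<cdot>\<^sub>m embed n qs X"
  by (rule eq_matI) (use assms in \<open>auto simp: embed_index li_less\<close>)

lemma prod_mats_Nil[simp]: "prod_mats d [] = 1\<^sub>m d" by (simp add: prod_mats_def)
lemma prod_mats_Cons[simp]: "prod_mats d (M # Ms) = M * prod_mats d Ms" by (simp add: prod_mats_def)

lemma prod_mats_carrier: "(\<forall>M\<in>set Ms. M \<in> carrier_mat d d) \<Longrightarrow> prod_mats d Ms \<in> carrier_mat d d"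
  by (induction Ms) auto

lemma prod_mats_append:
  "(\<forall>M\<in>set (xs @ ys). M \<in> carrier_mat d d) \<Longrightarrow> prod_mats d (xs @ ys) = prod_mats d xs * prod_mats d ys"
proof (induction xs)
  case Nil
  then have "prod_mats d ys \<in> carrier_mat d d" by (intro prod_mats_carrier) auto
  then show ?case by simp
next
  case (Cons M xs)
  have c: "M \<in> carrier_mat d d" "prod_mats d xs \<in> carrier_mat d d" "prod_mats d ys \<in> carrier_mat d d"
    using Cons.prems by (auto intro!: prod_mats_carrier)
  have "prod_mats d ((M # xs) @ ys) = M * (prod_mats d xs * prod_mats d ys)" using Cons by simp
  also have "\<dots> = (M * prod_mats d xs) * prod_mats d ys" using assoc_mult_mat[OF c] by simp
  finally show ?case by simp
qed

lemma prod_mats_commute: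
  assumes X: "X \<in> carrier_mat d d" and Ms: "\<forall>M\<in>set Ms. M \<in> carrier_mat d d \<and> X * M = M * X"
  shows "X * prod_mats d Ms = prod_mats d Ms * X"
  using Ms
proof (induction Ms)
  case Nil then show ?case using X by simp
next
  case (Cons M Ms)
  have c: "M \<in> carrier_mat d d" "prod_mats d Ms \<in> carrier_mat d d" and xm: "X * M = M * X"
    using Cons.prems by (auto intro!: prod_mats_carrier)
  have ih: "X * prod_mats d Ms = prod_mats d Ms * X" using Cons by auto
  have "X * (M * prod_mats d Ms) = (X * M) * prod_mats d Ms" using assoc_mult_mat[OF X c] by simp
  also have "\<dots> = M * (X * prod_mats d Ms)" unfolding xm using assoc_mult_mat[OF c(1) X c(2)] by simp
  also have "\<dots> = (M * prod_mats d Ms) * X" unfolding ih using assoc_mult_mat[OF c X] by simp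
  finally show ?case by simp
qed

lemma massoc:
  assumes "dim_col A = dim_row B" "dim_col B = dim_row C"
  shows "(A * B) * C = A * (B * (C :: complex mat))"
proof -
  have a: "A \<in> carrier_mat (dim_row A) (dim_col A)" by (rule carrier_matI) (rule refl)+
  have b: "B \<in> carrier_mat (dim_col A) (dim_col B)" by (rule carrier_matI) (rule assms(1)[symmetric], rule refl)
  have c: "C \<in> carrier_mat (dim_col B) (dim_col C)" by (rule carrier_matI) (rule assms(2)[symmetric], rule refl)
  show ?thesis by (rule assoc_mult_mat[OF a b c])
qed

definition Q :: "nat \<Rightarrow> nat list \<Rightarrow> (nat \<Rightarrow> complex mat) \<Rightarrow> complex mat" where
  "Q n js A = prod_mats (2^n) (map (\<lambda>j. embed n [j] (A j)) js)"

definition ps :: "nat \<Rightarrow> (nat \<Rightarrow> complex mat) \<Rightarrow> complex mat" where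
  "ps n A = Q n [0..<n] A"

lemma Q_carrier[simp]: "Q n js A \<in> carrier_mat (2^n) (2^n)"
  unfolding Q_def by (rule prod_mats_carrier) auto

lemma Q_dims[simp]: "dim_row (Q n js A) = 2^n" "dim_col (Q n js A) = 2^n"
  by (rule carrier_matD[OF Q_carrier])+

lemma ps_carrier[simp]: "ps n A \<in> carrier_mat (2^n) (2^n)"
  by (simp add: ps_def)

lemma Q_Nil[simp]: "Q n [] A = 1\<^sub>m (2^n)" by (simp add: Q_def)
lemma Q_Cons: "Q n (j # js) A = embed n [j] (A j) * Q n js A" by (simp add: Q_def)

lemma Q_append: "Q n (xs @ ys) A = Q n xs A * Q n ys A"
  unfolding Q_def by (subst map_append, rule prod_mats_append) auto

lemma Q_cong: "(\<And>j. j \<in> set js \<Longrightarrow> A j = B j) \<Longrightarrow> Q n js A = Q n js B"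
proof -
  assume a: "\<And>j. j \<in> set js \<Longrightarrow> A j = B j"
  have "map (\<lambda>j. embed n [j] (A j)) js = map (\<lambda>j. embed n [j] (B j)) js"
    by (rule map_cong) (simp_all add: a)
  then show ?thesis unfolding Q_def by (rule arg_cong[where f="prod_mats (2^n)"])
qed

lemma single_commute: "j < n \<Longrightarrow> j' < n \<Longrightarrow> j \<noteq> j' \<Longrightarrow>
  embed n [j] a * embed n [j'] b = embed n [j'] b * embed n [j] a"
  by (rule embed_commute) auto

lemma Q_commute_single:
  assumes "j < n" "j \<notin> set js" "set js \<subseteq> {0..<n}"
  shows "embed n [j] a * Q n js A = Q n js A * embed n [j] a"
  unfolding Q_def by (rule prod_mats_commute) (use assms in \<open>auto intro!: single_commute\<close>)

lemma Q_perm: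
  assumes "distinct js" "distinct js'" "set js = set js'" "set js \<subseteq> {0..<n}"
  shows "Q n js A = Q n js' A"
  using assms
proof (induction js arbitrary: js')
  case Nil then show ?case by simp
next
  case (Cons j js)
  then have "j \<in> set js'" by auto
  then obtain xs ys where js': "js' = xs @ j # ys" by (meson split_list)
  have j: "j < n" "j \<notin> set xs" "set xs \<subseteq> {0..<n}" using Cons.prems js' by auto
  have "Q n js' A = Q n xs A * (embed n [j] (A j) * Q n ys A)" by (simp add: js' Q_append Q_Cons)
  also have "\<dots> = (Q n xs A * embed n [j] (A j)) * Q n ys A" by (simp add: massoc)
  also have "\<dots> = (embed n [j] (A j) * Q n xs A) * Q n ys A"
    using Q_commute_single[OF j] by simp
  also have "\<dots> = embed n [j] (A j) * Q n (xs @ ys) A" by (simp add: Q_append massoc)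
  also have "Q n (xs @ ys) A = Q n js A"
    using Cons.prems js' by (intro Cons.IH[symmetric]) auto
  finally show ?case by (simp add: Q_Cons)
qed

lemma Q_mult:
  assumes "distinct js" "set js \<subseteq> {0..<n}" "\<forall>j\<in>set js. A j \<in> carrier_mat 2 2 \<and> B j \<in> carrier_mat 2 2"
  shows "Q n js A * Q n js B = Q n js (\<lambda>j. A j * B j)"
  using assms
proof (induction js)
  case Nil then show ?case by simp
next
  case (Cons j js)
  let ?a = "embed n [j] (A j)" and ?b = "embed n [j] (B j)"
  have j: "j < n" "j \<notin> set js" "set js \<subseteq> {0..<n}" using Cons.prems by auto
  have cm: "?b * Q n js A = Q n js A * ?b" using Q_commute_single[OF j] by simp
  have "Q n (j # js) A * Q n (j # js) B = ?a * (Q n js A * ?b) * Q n js B" by (simp add: Q_Cons massoc)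
  also have "\<dots> = ?a * ?b * (Q n js A * Q n js B)" by (simp add: cm[symmetric] massoc)
  also have "?a * ?b = embed n [j] (A j * B j)" using Cons.prems by (intro E1) auto
  also have "Q n js A * Q n js B = Q n js (\<lambda>j. A j * B j)" using Cons by auto
  finally show ?case by (simp add: Q_Cons)
qed

lemma Q_smult:
  assumes "\<forall>j\<in>set js. A j \<in> carrier_mat 2 2"
  shows "Q n js (\<lambda>j. c j \<cdot>\<^sub>m A j) = prod_list (map c js) \<cdot>\<^sub>m Q n js A"
  using assms
proof (induction js)
  case Nil then show ?case by simp
next
  case (Cons j js)
  have "embed n [j] (c j \<cdot>\<^sub>m A j) = c j \<cdot>\<^sub>m embed n [j] (A j)" using Cons.prems by (intro E5) auto
  then show ?case using Cons by (simp add: Q_Cons smult_mult_smult[of _ "2^n" "2^n" _ "2^n"])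
qed

lemma Q_one:
  assumes "set js \<subseteq> {0..<n}" "\<forall>j\<in>set js. A j = 1\<^sub>m 2"
  shows "Q n js A = 1\<^sub>m (2^n)"
  using assms
proof (induction js)
  case Nil then show ?case by simp
next
  case (Cons j js)
  have "embed n [j] (1\<^sub>m (2 ^ length [j])) = 1\<^sub>m (2^n)" using Cons.prems by (intro E4) auto
  then show ?case using Cons by (simp add: Q_Cons)
qed

lemma EP:
  assumes d: "distinct qs" and s: "set qs \<subseteq> {0..<n}"
    and Ms: "\<forall>M\<in>set Ms. M \<in> carrier_mat (2 ^ length qs) (2 ^ length qs)"
  shows "embed n qs (prod_mats (2 ^ length qs) Ms) = prod_mats (2^n) (map (embed n qs) Ms)"
  using Ms
proof (induction Ms)
  case Nil then show ?case using E4[OF s] by simp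
next
  case (Cons M Ms)
  have "prod_mats (2 ^ length qs) Ms \<in> carrier_mat (2 ^ length qs) (2 ^ length qs)"
    using Cons.prems by (intro prod_mats_carrier) auto
  then have "embed n qs (M * prod_mats (2 ^ length qs) Ms) = embed n qs M * embed n qs (prod_mats (2 ^ length qs) Ms)"
    using Cons.prems by (intro E1[OF d s, symmetric]) auto
  then show ?case using Cons by simp
qed

lemma Q_qs:
  assumes d: "distinct qs" and s: "set qs \<subseteq> {0..<n}"
  shows "Q n qs A = embed n qs (Q (length qs) [0..<length qs] (\<lambda>m. A (qs ! m)))"
proof -
  let ?k = "length qs"
  have "embed n qs (Q ?k [0..<?k] (\<lambda>m. A (qs ! m))) =
     prod_mats (2^n) (map (embed n qs) (map (\<lambda>m. embed ?k [m] (A (qs ! m))) [0..<?k]))"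
    unfolding Q_def by (rule EP[OF d s]) auto
  also have "map (embed n qs) (map (\<lambda>m. embed ?k [m] (A (qs ! m))) [0..<?k]) =
       map (\<lambda>m. embed n [qs ! m] (A (qs ! m))) [0..<?k]"
    using E3[OF d s] by simp
  also have "\<dots> = map (\<lambda>j. embed n [j] (A j)) (map (\<lambda>m. qs ! m) [0..<?k])" by simp
  also have "map (\<lambda>m. qs ! m) [0..<?k] = qs" by (rule map_nth)
  finally show ?thesis by (simp add: Q_def)
qed

lemma prod_list_ones: "prod_list (map (\<lambda>_. (1::complex)) xs) = 1"
  by (induction xs) auto

lemma embed_scalar_one:
  assumes "j < n"
  shows "embed n [j] (c \<cdot>\<^sub>m 1\<^sub>m 2) = c \<cdot>\<^sub>m 1\<^sub>m (2^n)"
proof -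
  have "embed n [j] (c \<cdot>\<^sub>m 1\<^sub>m (2 ^ length [j])) = c \<cdot>\<^sub>m embed n [j] (1\<^sub>m (2 ^ length [j]))"
    by (rule E5) simp
  also have "embed n [j] (1\<^sub>m (2 ^ length [j])) = 1\<^sub>m (2^n)" by (rule E4) (use assms in simp)
  finally show ?thesis by simp
qed

lemma scalar_one_commute:
  assumes "X \<in> carrier_mat d d"
  shows "X * (c \<cdot>\<^sub>m 1\<^sub>m d) = (c \<cdot>\<^sub>m 1\<^sub>m d) * (X :: complex mat)"
proof -
  have "X * (c \<cdot>\<^sub>m 1\<^sub>m d) = c \<cdot>\<^sub>m (X * 1\<^sub>m d)" by (rule mult_smult_distrib[OF assms one_carrier_mat])
  also have "\<dots> = c \<cdot>\<^sub>m X" using assms by simp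
  also have "\<dots> = c \<cdot>\<^sub>m (1\<^sub>m d * X)" using assms by simp
  also have "\<dots> = (c \<cdot>\<^sub>m 1\<^sub>m d) * X" by (rule mult_smult_assoc_mat[OF one_carrier_mat assms, symmetric])
  finally show ?thesis .
qed

lemma gate_lemma:
  assumes vg: "valid_gate_12 n (qs, U)" and A: "\<forall>j<n. A j \<in> pauli1"
  shows "\<exists>B. (\<forall>j<n. B j \<in> pauli1) \<and> (\<forall>j. j \<notin> set qs \<longrightarrow> B j = A j) \<and>
             ((\<forall>j\<in>set qs. sc (A j)) \<longrightarrow> B = A) \<and>
             embed n qs U * ps n A = ps n B * embed n qs U"
proof -
  have d: "distinct qs" and s: "set qs \<subseteq> {0..<n}" and len: "length qs \<in> {1,2}"
    and cl: "clifford (length qs) U"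
    using vg by (auto simp: valid_gate_12_def)
  define k where "k = length qs"
  have Uc: "U \<in> carrier_mat (2^k) (2^k)" and UU: "U * adj U = 1\<^sub>m (2^k)"
    using cl by (auto simp: clifford_def unitary_mat_def k_def)
  have adjc: "adj U \<in> carrier_mat (2^k) (2^k)"
    unfolding adj_def carrier_matD[OF Uc] by (rule mat_carrier)
  have UU': "adj U * U = 1\<^sub>m (2^k)" by (rule mat_mult_left_right_inverse[OF Uc adjc UU])
  have Ac: "\<forall>j<n. A j \<in> carrier_mat 2 2" using A pauli1_carrier by auto
  define rest where "rest = filter (\<lambda>j. j \<notin> set qs) [0..<n]"
  have rest_set: "set rest \<subseteq> {0..<n}" "set qs \<inter> set rest = {}" by (auto simp: rest_def)
  have split: "ps n B = Q n qs B * Q n rest B" for B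
  proof -
    have "ps n B = Q n (qs @ rest) B" unfolding ps_def
      by (rule Q_perm) (use d s in \<open>auto simp: rest_def\<close>)
    then show ?thesis by (simp add: Q_append)
  qed
  have comm_rest: "embed n qs U * Q n rest B = Q n rest B * embed n qs U" for B
    unfolding Q_def
  proof (rule prod_mats_commute)
    show "\<forall>M\<in>set (map (\<lambda>j. embed n [j] (B j)) rest). M \<in> carrier_mat (2^n) (2^n) \<and>
        embed n qs U * M = M * embed n qs U"
    proof
      fix M assume "M \<in> set (map (\<lambda>j. embed n [j] (B j)) rest)"
      then obtain j where j: "j \<in> set rest" "M = embed n [j] (B j)" by auto
      have "embed n qs U * embed n [j] (B j) = embed n [j] (B j) * embed n qs U"
        by (rule embed_commute) (use s j rest_set in auto)
      then show "M \<in> carrier_mat (2^n) (2^n) \<and> embed n qs U * M = M * embed n qs U" using j by simp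
    qed
  qed simp
  show ?thesis
  proof (cases "\<forall>j\<in>set qs. sc (A j)")
    case True
    have "embed n qs U * ps n A = ps n A * embed n qs U"
      unfolding ps_def Q_def
    proof (rule prod_mats_commute)
      show "\<forall>M\<in>set (map (\<lambda>j. embed n [j] (A j)) [0..<n]). M \<in> carrier_mat (2^n) (2^n) \<and>
          embed n qs U * M = M * embed n qs U"
      proof
        fix M assume "M \<in> set (map (\<lambda>j. embed n [j] (A j)) [0..<n])"
        then obtain j where j: "j < n" "M = embed n [j] (A j)" by auto
        have "embed n qs U * embed n [j] (A j) = embed n [j] (A j) * embed n qs U"
        proof (cases "j \<in> set qs")
          case True
          then obtain c where c: "A j = c \<cdot>\<^sub>m 1\<^sub>m 2" using \<open>\<forall>j\<in>set qs. sc (A j)\<close> by (auto simp: sc_def)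
          show ?thesis unfolding c embed_scalar_one[OF j(1)] by (rule scalar_one_commute) simp
        next
          case False
          show ?thesis by (rule embed_commute) (use s j False in auto)
        qed
        then show "M \<in> carrier_mat (2^n) (2^n) \<and> embed n qs U * M = M * embed n qs U" using j by simp
      qed
    qed simp
    then show ?thesis using A by (intro exI[of _ A]) auto
  next
    case False
    have ex: "\<forall>m\<in>{..<k}. \<exists>cs. fst cs \<in> phases \<and> snd cs \<in> pauli_basis \<and> A (qs ! m) = fst cs \<cdot>\<^sub>m snd cs"
    proof
      fix m assume "m \<in> {..<k}"
      then have "qs ! m \<in> set qs" by (simp add: k_def)
      then have "A (qs ! m) \<in> pauli1" using A s by auto
      then show "\<exists>cs. fst cs \<in> phases \<and> snd cs \<in> pauli_basis \<and> A (qs ! m) = fst cs \<cdot>\<^sub>m snd cs"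
        by (auto simp: pauli1_def)
    qed
    obtain f where f: "\<forall>m\<in>{..<k}. fst (f m) \<in> phases \<and> snd (f m) \<in> pauli_basis \<and> A (qs ! m) = fst (f m) \<cdot>\<^sub>m snd (f m)"
      using bchoice[OF ex] by blast
    define c where "c m = fst (f m)" for m
    define \<sigma> where "\<sigma> m = snd (f m)" for m
    have c\<sigma>: "c m \<in> phases" "\<sigma> m \<in> pauli_basis" "A (qs ! m) = c m \<cdot>\<^sub>m \<sigma> m" if "m < k" for m
      using f that by (auto simp: c_def \<sigma>_def)
    define T where "T = Q k [0..<k] (\<lambda>m. A (qs ! m))"
    have Tc: "T \<in> carrier_mat (2^k) (2^k)" by (simp add: T_def)
    have "T = Q k [0..<k] (\<lambda>m. c m \<cdot>\<^sub>m \<sigma> m)" unfolding T_def by (rule Q_cong) (simp add: c\<sigma>)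
    also have "\<dots> = prod_list (map c [0..<k]) \<cdot>\<^sub>m Q k [0..<k] \<sigma>"
      by (rule Q_smult) (use c\<sigma> pauli_basis_carrier in auto)
    also have "Q k [0..<k] \<sigma> = prod_mats (2^k) (map (\<lambda>m. embed k [m] (map \<sigma> [0..<k] ! m)) [0..<k])"
      unfolding Q_def by (rule arg_cong[where f="prod_mats (2^k)"]) simp
    finally have Teq: "T = prod_list (map c [0..<k]) \<cdot>\<^sub>m prod_mats (2^k) (map (\<lambda>m. embed k [m] (map \<sigma> [0..<k] ! m)) [0..<k])" .
    have "T \<in> pauli_group k" unfolding pauli_group_def
      by (rule CollectI, rule exI[of _ "prod_list (map c [0..<k])"], rule exI[of _ "map \<sigma> [0..<k]"])
         (use Teq c\<sigma> in \<open>auto intro!: prod_list_phases\<close>)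
    then have "U * T * adj U \<in> pauli_group k" using cl by (auto simp: clifford_def k_def)
    then obtain c' \<sigma>s' where c': "c' \<in> phases" "length \<sigma>s' = k" "set \<sigma>s' \<subseteq> pauli_basis"
      and P: "U * T * adj U = c' \<cdot>\<^sub>m prod_mats (2^k) (map (\<lambda>m. embed k [m] (\<sigma>s' ! m)) [0..<k])"
      unfolding pauli_group_def by blast
    define B0 where "B0 j = \<sigma>s' ! idx qs j" for j
    have B0b: "B0 j \<in> pauli_basis" if "j \<in> set qs" for j
      using idx_props[OF d that] c' by (auto simp: B0_def k_def)
    have B0c: "B0 j \<in> carrier_mat 2 2" if "j \<in> set qs" for j using B0b[OF that] pauli_basis_carrier by auto
    have "prod_mats (2^k) (map (\<lambda>m. embed k [m] (\<sigma>s' ! m)) [0..<k]) = Q k [0..<k] (\<lambda>m. B0 (qs ! m))"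
      unfolding Q_def by (rule arg_cong[where f="prod_mats (2^k)"]) (simp add: B0_def idx_nth d k_def)
    then have P': "U * T * adj U = c' \<cdot>\<^sub>m Q k [0..<k] (\<lambda>m. B0 (qs ! m))" using P by simp
    define coef where "coef j = (if j = qs ! 0 then c' else 1)" for j
    define B where "B j = (if j \<in> set qs then coef j \<cdot>\<^sub>m B0 j else A j)" for j
    have qs_ne: "qs \<noteq> []" using len by auto
    then obtain q0 qs' where qs_eq: "qs = q0 # qs'" by (cases qs) auto
    have q0: "q0 \<notin> set qs'" using d qs_eq by auto
    have "prod_list (map coef qs) = c'"
    proof -
      have "map coef qs' = map (\<lambda>_. 1) qs'" using q0 by (auto simp: coef_def qs_eq)
      then have "prod_list (map coef qs') = 1" using prod_list_ones by metis
      moreover have "coef q0 = c'" by (simp add: coef_def qs_eq)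
      ultimately show ?thesis by (simp add: qs_eq)
    qed
    have embP: "embed n qs (U * T * adj U) = Q n qs B"
    proof -
      have "embed n qs (U * T * adj U) = c' \<cdot>\<^sub>m embed n qs (Q k [0..<k] (\<lambda>m. B0 (qs ! m)))"
        unfolding P' by (rule E5) (simp add: k_def)
      also have "embed n qs (Q k [0..<k] (\<lambda>m. B0 (qs ! m))) = Q n qs B0"
        using Q_qs[OF d s, of B0] by (simp add: k_def)
      also have "c' \<cdot>\<^sub>m Q n qs B0 = Q n qs (\<lambda>j. coef j \<cdot>\<^sub>m B0 j)"
        using Q_smult[of qs B0 n coef] B0c \<open>prod_list (map coef qs) = c'\<close> by simp
      also have "\<dots> = Q n qs B" by (rule Q_cong) (simp add: B_def)
      finally show ?thesis .
    qed
    have Pc: "U * T * adj U \<in> carrier_mat (2^k) (2^k)" using Uc Tc adjc by simp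
    have UT: "U * T = (U * T * adj U) * U"
    proof -
      have "(U * T * adj U) * U = (U * T) * (adj U * U)"
        by (rule assoc_mult_mat[of _ "2^k" "2^k" _ "2^k" _ "2^k"]) (use Uc Tc adjc in simp_all)
      also have "\<dots> = U * T" unfolding UU' using Uc Tc by simp
      finally show ?thesis by simp
    qed
    have eUQ: "embed n qs U * Q n qs A = embed n qs (U * T)"
    proof -
      have "Q n qs A = embed n qs T" unfolding T_def k_def by (rule Q_qs[OF d s])
      then show ?thesis using E1[OF d s, of U T] Uc Tc by (simp add: k_def)
    qed
    have eUT: "embed n qs (U * T) = embed n qs (U * T * adj U) * embed n qs U"
    proof -
      have "embed n qs (U * T * adj U) * embed n qs U = embed n qs (U * T * adj U * U)"
        using E1[OF d s, of "U * T * adj U" U] Pc Uc by (simp add: k_def)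
      then show ?thesis by (simp only: UT[symmetric])
    qed
    have "embed n qs U * ps n A = (embed n qs U * Q n qs A) * Q n rest A"
      unfolding split by (simp add: massoc)
    also have "\<dots> = Q n qs B * (embed n qs U * Q n rest A)"
      unfolding eUQ eUT embP by (simp add: massoc)
    also have "\<dots> = Q n qs B * Q n rest B * embed n qs U"
    proof -
      have "Q n rest A = Q n rest B" by (rule Q_cong) (auto simp: B_def rest_def)
      then show ?thesis unfolding comm_rest by (simp add: massoc)
    qed
    also have "\<dots> = ps n B * embed n qs U" unfolding split ..
    finally have main: "embed n qs U * ps n A = ps n B * embed n qs U" .
    have Bp: "\<forall>j<n. B j \<in> pauli1"
    proof (intro allI impI)
      fix j assume j: "j < n"
      show "B j \<in> pauli1"
      proof (cases "j \<in> set qs")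
        case True
        have "coef j \<in> phases" using c' by (auto simp: coef_def one_phases)
        then show ?thesis using True B0b[OF True] by (auto simp: B_def pauli1_def)
      next
        case False then show ?thesis using A j by (simp add: B_def)
      qed
    qed
    show ?thesis using Bp main False by (intro exI[of _ B]) (auto simp: B_def)
  qed
qed

definition R :: "layer \<Rightarrow> nat \<Rightarrow> nat \<Rightarrow> bool" where
  "R L a b \<longleftrightarrow> a = b \<or> (\<exists>g\<in>set L. a \<in> set (fst g) \<and> b \<in> set (fst g))"

fun reach :: "circuit \<Rightarrow> nat \<Rightarrow> nat \<Rightarrow> bool" where
  "reach [] a b = (a = b)"
| "reach (L # Ls) a b = (\<exists>c. R L a c \<and> reach Ls c b)"

fun circ :: "nat \<Rightarrow> circuit \<Rightarrow> complex mat" where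
  "circ n [] = 1\<^sub>m (2^n)"
| "circ n (L # Ls) = circ n Ls * layer_op n L"

lemma layer_op_carrier[simp]: "layer_op n L \<in> carrier_mat (2^n) (2^n)"
  unfolding layer_op_def by (rule prod_mats_carrier) auto

lemma layer_op_dims[simp]: "dim_row (layer_op n L) = 2^n" "dim_col (layer_op n L) = 2^n"
  by (rule carrier_matD[OF layer_op_carrier])+

lemma circ_carrier[simp]: "circ n Ls \<in> carrier_mat (2^n) (2^n)"
  by (induction Ls) auto

lemma circ_dims[simp]: "dim_row (circ n Ls) = 2^n" "dim_col (circ n Ls) = 2^n"
  by (rule carrier_matD[OF circ_carrier])+

lemma ps_dims[simp]: "dim_row (ps n A) = 2^n" "dim_col (ps n A) = 2^n"
  by (rule carrier_matD[OF ps_carrier])+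

lemma layer_op_Nil: "layer_op n [] = 1\<^sub>m (2^n)" by (simp add: layer_op_def)
lemma layer_op_Cons: "layer_op n ((qs, U) # L) = embed n qs U * layer_op n L" by (simp add: layer_op_def)

lemma valid_layer_Cons:
  assumes "valid_layer n (g # L)"
  shows "valid_layer n L" "valid_gate_12 n g" "\<forall>g'\<in>set L. set (fst g) \<inter> set (fst g') = {}"
proof -
  show "valid_layer n L" unfolding valid_layer_def
  proof (intro conjI allI impI ballI)
    fix g' assume "g' \<in> set L" then show "valid_gate_12 n g'" using assms by (auto simp: valid_layer_def)
  next
    fix a b assume "a < length L" "b < length L" "a \<noteq> b"
    then show "set (fst (L ! a)) \<inter> set (fst (L ! b)) = {}"
      using assms unfolding valid_layer_def
      by (metis Suc_less_eq length_Cons nat.inject nth_Cons_Suc)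
  qed
  show "valid_gate_12 n g" using assms by (auto simp: valid_layer_def)
  show "\<forall>g'\<in>set L. set (fst g) \<inter> set (fst g') = {}"
  proof
    fix g' assume "g' \<in> set L"
    then obtain i where i: "i < length L" "L ! i = g'" by (auto simp: in_set_conv_nth)
    then show "set (fst g) \<inter> set (fst g') = {}"
      using assms unfolding valid_layer_def
      by (metis Suc_less_eq length_Cons nat.distinct(1) nth_Cons_0 nth_Cons_Suc zero_less_Suc)
  qed
qed

lemma layer_lemma:
  assumes "valid_layer n L" "\<forall>j<n. A j \<in> pauli1"
  shows "\<exists>B. (\<forall>j<n. B j \<in> pauli1) \<and> layer_op n L * ps n A = ps n B * layer_op n L \<and>
      (\<forall>j<n. \<not> sc (B j) \<longrightarrow> (\<exists>j'<n. \<not> sc (A j') \<and> R L j' j))"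
  using assms
proof (induction L arbitrary: A)
  case Nil
  show ?case by (rule exI[of _ A]) (use Nil in \<open>auto simp: layer_op_Nil R_def\<close>)
next
  case (Cons g L)
  obtain qs U where g: "g = (qs, U)" by (cases g)
  have vL: "valid_layer n L" and vg: "valid_gate_12 n (qs, U)"
    and disj: "\<forall>g'\<in>set L. set qs \<inter> set (fst g') = {}"
    using valid_layer_Cons[OF Cons.prems(1)] g by auto
  have s: "set qs \<subseteq> {0..<n}" using vg by (auto simp: valid_gate_12_def)
  obtain B1 where B1: "\<forall>j<n. B1 j \<in> pauli1" "layer_op n L * ps n A = ps n B1 * layer_op n L"
    "\<forall>j<n. \<not> sc (B1 j) \<longrightarrow> (\<exists>j'<n. \<not> sc (A j') \<and> R L j' j)"
    using Cons.IH[OF vL Cons.prems(2)] by blast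
  obtain B2 where B2: "\<forall>j<n. B2 j \<in> pauli1" "\<forall>j. j \<notin> set qs \<longrightarrow> B2 j = B1 j"
    "(\<forall>j\<in>set qs. sc (B1 j)) \<longrightarrow> B2 = B1" "embed n qs U * ps n B1 = ps n B2 * embed n qs U"
    using gate_lemma[OF vg B1(1)] by blast
  have eq: "layer_op n (g # L) * ps n A = ps n B2 * layer_op n (g # L)"
  proof -
    have "layer_op n (g # L) * ps n A = embed n qs U * (layer_op n L * ps n A)"
      by (simp add: g layer_op_Cons massoc)
    also have "\<dots> = (embed n qs U * ps n B1) * layer_op n L" unfolding B1(2) by (simp add: massoc)
    also have "\<dots> = ps n B2 * layer_op n (g # L)" unfolding B2(4) by (simp add: g layer_op_Cons massoc)
    finally show ?thesis .
  qed
  have supp: "\<exists>j'<n. \<not> sc (A j') \<and> R (g # L) j' j" if j: "j < n" "\<not> sc (B2 j)" for j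
  proof (cases "j \<in> set qs")
    case False
    then have "\<not> sc (B1 j)" using B2(2) j by auto
    then obtain j' where "j' < n" "\<not> sc (A j')" "R L j' j" using B1(3) j by blast
    then show ?thesis by (auto simp: R_def)
  next
    case True
    have "\<not> (\<forall>j\<in>set qs. sc (B1 j))"
    proof
      assume a: "\<forall>j\<in>set qs. sc (B1 j)"
      then have "B2 = B1" using B2(3) by blast
      then show False using a True j by auto
    qed
    then obtain j'' where j'': "j'' \<in> set qs" "\<not> sc (B1 j'')" by blast
    have "j'' < n" using j'' s by auto
    then obtain j' where j': "j' < n" "\<not> sc (A j')" "R L j' j''" using B1(3) j'' by blast
    have "R (g # L) j' j"
    proof (cases "j' = j''")
      case True then show ?thesis using j'' \<open>j \<in> set qs\<close> by (auto simp: R_def g)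
    next
      case False
      then obtain g' where "g' \<in> set L" "j' \<in> set (fst g')" "j'' \<in> set (fst g')" using j'(3) by (auto simp: R_def)
      then show ?thesis using disj j''(1) by blast
    qed
    then show ?thesis using j' by blast
  qed
  show ?case using B2(1) eq supp by blast
qed

lemma circ_lemma:
  assumes "\<forall>L\<in>set Ls. valid_layer n L" "\<forall>j<n. A j \<in> pauli1"
  shows "\<exists>B. (\<forall>j<n. B j \<in> pauli1) \<and> circ n Ls * ps n A = ps n B * circ n Ls \<and>
      (\<forall>j<n. \<not> sc (B j) \<longrightarrow> (\<exists>j'<n. \<not> sc (A j') \<and> reach Ls j' j))"
  using assms
proof (induction Ls arbitrary: A)
  case Nil
  show ?case by (rule exI[of _ A]) (use Nil in auto)
next
  case (Cons L Ls)
  obtain B1 where B1: "\<forall>j<n. B1 j \<in> pauli1" "layer_op n L * ps n A = ps n B1 * layer_op n L"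
    "\<forall>j<n. \<not> sc (B1 j) \<longrightarrow> (\<exists>j'<n. \<not> sc (A j') \<and> R L j' j)"
    using layer_lemma[of n L A] Cons.prems by auto
  obtain B2 where B2: "\<forall>j<n. B2 j \<in> pauli1" "circ n Ls * ps n B1 = ps n B2 * circ n Ls"
    "\<forall>j<n. \<not> sc (B2 j) \<longrightarrow> (\<exists>j'<n. \<not> sc (B1 j') \<and> reach Ls j' j)"
    using Cons.IH[of B1] Cons.prems B1(1) by auto
  have eq: "circ n (L # Ls) * ps n A = ps n B2 * circ n (L # Ls)"
  proof -
    have "circ n (L # Ls) * ps n A = circ n Ls * (layer_op n L * ps n A)" by (simp add: massoc)
    also have "\<dots> = (circ n Ls * ps n B1) * layer_op n L" unfolding B1(2) by (simp add: massoc)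
    also have "\<dots> = ps n B2 * circ n (L # Ls)" unfolding B2(2) by (simp add: massoc)
    finally show ?thesis .
  qed
  have supp: "\<exists>j'<n. \<not> sc (A j') \<and> reach (L # Ls) j' j" if j: "j < n" "\<not> sc (B2 j)" for j
  proof -
    obtain j'' where j'': "j'' < n" "\<not> sc (B1 j'')" "reach Ls j'' j" using B2(3) j by blast
    obtain j' where j': "j' < n" "\<not> sc (A j')" "R L j' j''" using B1(3) j'' by blast
    show ?thesis using j' j'' by auto
  qed
  show ?case using B2(1) eq supp by blast
qed

lemma noise_layer_ps: "noise_layer n f t = ps n (\<lambda>j. f (t, j))"
  by (simp add: noise_layer_def ps_def Q_def)

lemma ps_mult:
  assumes "\<forall>j<n. A j \<in> pauli1" "\<forall>j<n. B j \<in> pauli1"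
  shows "ps n A * ps n B = ps n (\<lambda>j. A j * B j)"
  unfolding ps_def by (rule Q_mult) (use assms pauli1_carrier in auto)

lemma ps_one: "ps n (\<lambda>_. 1\<^sub>m 2) = 1\<^sub>m (2^n)"
  unfolding ps_def by (rule Q_one) auto

lemma noisy_general:
  assumes "\<forall>L\<in>set Ls. valid_layer n L"
    and "\<forall>t'. t \<le> t' \<and> t' < t + length Ls \<longrightarrow> (\<forall>j<n. f (t', j) \<in> pauli1)"
  shows "\<exists>A. (\<forall>j<n. A j \<in> pauli1) \<and> noisy_exec_aux n f t Ls = ps n A * circ n Ls \<and>
     (\<forall>j<n. \<not> sc (A j) \<longrightarrow> (\<exists>t'. t \<le> t' \<and> t' < t + length Ls \<and>
        (\<exists>j'<n. \<not> sc (f (t', j')) \<and> reach (drop (t' - t + 1) Ls) j' j)))"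
  using assms
proof (induction Ls arbitrary: t)
  case Nil
  show ?case
    by (rule exI[of _ "\<lambda>_. 1\<^sub>m 2"]) (simp add: ps_one one_pauli1 sc_one)
next
  case (Cons L Ls)
  obtain A1 where A1: "\<forall>j<n. A1 j \<in> pauli1" "noisy_exec_aux n f (Suc t) Ls = ps n A1 * circ n Ls"
    "\<forall>j<n. \<not> sc (A1 j) \<longrightarrow> (\<exists>t'. Suc t \<le> t' \<and> t' < Suc t + length Ls \<and>
        (\<exists>j'<n. \<not> sc (f (t', j')) \<and> reach (drop (t' - Suc t + 1) Ls) j' j))"
    using Cons.IH[of "Suc t"] Cons.prems by auto
  have Ft: "\<forall>j<n. f (t, j) \<in> pauli1" using Cons.prems(2) by auto
  obtain C where C: "\<forall>j<n. C j \<in> pauli1" "circ n Ls * ps n (\<lambda>j. f (t, j)) = ps n C * circ n Ls"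
    "\<forall>j<n. \<not> sc (C j) \<longrightarrow> (\<exists>j'<n. \<not> sc (f (t, j')) \<and> reach Ls j' j)"
    using circ_lemma[OF _ Ft, of Ls] Cons.prems(1) by auto
  have eq: "noisy_exec_aux n f t (L # Ls) = ps n (\<lambda>j. A1 j * C j) * circ n (L # Ls)"
  proof -
    have "noisy_exec_aux n f t (L # Ls) = ps n A1 * (circ n Ls * ps n (\<lambda>j. f (t, j))) * layer_op n L"
      by (simp add: A1(2) noise_layer_ps massoc)
    also have "\<dots> = (ps n A1 * ps n C) * circ n (L # Ls)" unfolding C(2) by (simp add: massoc)
    also have "ps n A1 * ps n C = ps n (\<lambda>j. A1 j * C j)" by (rule ps_mult[OF A1(1) C(1)])
    finally show ?thesis .
  qed
  have supp: "\<exists>t'. t \<le> t' \<and> t' < t + length (L # Ls) \<and>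
        (\<exists>j'<n. \<not> sc (f (t', j')) \<and> reach (drop (t' - t + 1) (L # Ls)) j' j)"
    if j: "j < n" "\<not> sc (A1 j * C j)" for j
  proof (cases "sc (A1 j)")
    case False
    then obtain t' j' where tj: "Suc t \<le> t'" "t' < Suc t + length Ls" "j' < n" "\<not> sc (f (t', j'))"
      "reach (drop (t' - Suc t + 1) Ls) j' j" using A1(3) j by blast
    have "drop (t' - t + 1) (L # Ls) = drop (t' - Suc t + 1) Ls" using tj(1)
      by (simp add: Suc_diff_Suc)
    then show ?thesis using tj by (intro exI[of _ t']) auto
  next
    case True
    then have "\<not> sc (C j)" using j sc_mult by blast
    then obtain j' where "j' < n" "\<not> sc (f (t, j'))" "reach Ls j' j" using C(3) j by blast
    then show ?thesis by (intro exI[of _ t]) auto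
  qed
  show ?case using A1(1) C(1) eq supp pauli1_mult by (intro exI[of _ "\<lambda>j. A1 j * C j"]) auto
qed

lemma noisy_last:
  assumes "Ls \<noteq> []" "\<forall>t'. t \<le> t' \<and> t' < t + length Ls - 1 \<longrightarrow> (\<forall>j<n. f (t', j) = 1\<^sub>m 2)"
  shows "noisy_exec_aux n f t Ls = ps n (\<lambda>j. f (t + length Ls - 1, j)) * circ n Ls"
  using assms
proof (induction Ls arbitrary: t)
  case Nil then show ?case by simp
next
  case (Cons L Ls)
  show ?case
  proof (cases "Ls = []")
    case True
    then show ?thesis by (simp add: noise_layer_ps)
  next
    case False
    have IH: "noisy_exec_aux n f (Suc t) Ls = ps n (\<lambda>j. f (Suc t + length Ls - 1, j)) * circ n Ls"
      using Cons.IH[OF False] Cons.prems(2) by auto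
    have "ps n (\<lambda>j. f (t, j)) = ps n (\<lambda>_. 1\<^sub>m 2)"
      unfolding ps_def by (rule Q_cong) (use Cons.prems(2) False in auto)
    then have N: "noise_layer n f t = 1\<^sub>m (2^n)" by (simp add: noise_layer_ps ps_one)
    have e: "Suc t + length Ls - 1 = t + length (L # Ls) - 1" using False by simp
    show ?thesis using IH N e by (simp add: massoc)
  qed
qed

lemma gate_unique:
  assumes "valid_layer n L" "g \<in> set L" "g' \<in> set L" "a \<in> set (fst g)" "a \<in> set (fst g')"
  shows "g = g'"
proof -
  obtain i where i: "i < length L" "L ! i = g" using assms(2) by (auto simp: in_set_conv_nth)
  obtain i' where i': "i' < length L" "L ! i' = g'" using assms(3) by (auto simp: in_set_conv_nth)
  show ?thesis
  proof (cases "i = i'")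
    case True then show ?thesis using i i' by simp
  next
    case False
    then have "set (fst g) \<inter> set (fst g') = {}" using assms(1) i i' by (auto simp: valid_layer_def)
    then show ?thesis using assms(4,5) by blast
  qed
qed

lemma R_sym: "R L a b = R L b a" by (auto simp: R_def)

lemma R_card:
  assumes "valid_layer n L"
  shows "finite {b. R L a b} \<and> card {b. R L a b} \<le> 2"
proof (cases "\<exists>g\<in>set L. a \<in> set (fst g)")
  case True
  then obtain g where g: "g \<in> set L" "a \<in> set (fst g)" by blast
  have sub: "{b. R L a b} \<subseteq> set (fst g)"
  proof
    fix b assume "b \<in> {b. R L a b}"
    then have "a = b \<or> (\<exists>g'\<in>set L. a \<in> set (fst g') \<and> b \<in> set (fst g'))" by (simp add: R_def)
    then show "b \<in> set (fst g)"
      using g gate_unique[OF assms g(1)] by blast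
  qed
  have vg: "valid_gate_12 n g" using assms g(1) by (simp add: valid_layer_def)
  have "length (fst g) \<in> {1, 2}" using vg by (cases g) (simp add: valid_gate_12_def)
  then have "length (fst g) \<le> 2" by auto
  then have "card (set (fst g)) \<le> 2" using card_length order_trans by blast
  then show ?thesis using sub card_mono[OF finite_set sub] finite_subset[OF sub] by simp
next
  case False
  then have "{b. R L a b} = {a}" by (auto simp: R_def)
  then show ?thesis by simp
qed

lemma reach_fwd:
  assumes "\<forall>L\<in>set Ls. valid_layer n L"
  shows "finite {b. reach Ls a b} \<and> card {b. reach Ls a b} \<le> 2 ^ length Ls"
  using assms
proof (induction Ls arbitrary: a)
  case Nil then show ?case by simp
next
  case (Cons L Ls)
  have eq: "{b. reach (L # Ls) a b} = (\<Union>c\<in>{c. R L a c}. {b. reach Ls c b})" by auto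
  have RL: "finite {c. R L a c}" "card {c. R L a c} \<le> 2" using R_card[of n L a] Cons.prems by auto
  have IH: "finite {b. reach Ls c b} \<and> card {b. reach Ls c b} \<le> 2 ^ length Ls" for c
    using Cons.IH Cons.prems by auto
  have "card {b. reach (L # Ls) a b} \<le> (\<Sum>c\<in>{c. R L a c}. card {b. reach Ls c b})"
    unfolding eq by (rule card_UN_le[OF RL(1)])
  also have "\<dots> \<le> card {c. R L a c} * 2 ^ length Ls"
    using sum_bounded_above[of "{c. R L a c}" "\<lambda>c. card {b. reach Ls c b}" "2 ^ length Ls"] IH by simp
  also have "\<dots> \<le> 2 * 2 ^ length Ls" using RL(2) by simp
  finally show ?case using eq RL IH by auto
qed

lemma reach_bwd:
  assumes "\<forall>L\<in>set Ls. valid_layer n L"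
  shows "finite {a. reach Ls a b} \<and> card {a. reach Ls a b} \<le> 2 ^ length Ls"
  using assms
proof (induction Ls)
  case Nil then show ?case by simp
next
  case (Cons L Ls)
  have eq: "{a. reach (L # Ls) a b} = (\<Union>c\<in>{c. reach Ls c b}. {a. R L c a})" by (auto simp: R_sym)
  have RL: "finite {a. R L c a} \<and> card {a. R L c a} \<le> 2" for c using R_card[of n L c] Cons.prems by auto
  have IH: "finite {c. reach Ls c b}" "card {c. reach Ls c b} \<le> 2 ^ length Ls"
    using Cons.IH Cons.prems by auto
  have "card {a. reach (L # Ls) a b} \<le> (\<Sum>c\<in>{c. reach Ls c b}. card {a. R L c a})"
    unfolding eq by (rule card_UN_le[OF IH(1)])
  also have "\<dots> \<le> card {c. reach Ls c b} * 2"
    using sum_bounded_above[of "{c. reach Ls c b}" "\<lambda>c. card {a. R L c a}" 2] RL by simp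
  also have "\<dots> \<le> 2 ^ length Ls * 2" using IH(2) by simp
  finally show ?case using eq RL IH by auto
qed

lemma union_bound_cone:
  fixes M :: "'w pmf" and W :: "'a set" and cone :: "'a \<Rightarrow> 'b set" and S :: "'w \<Rightarrow> 'b set"
  assumes W: "finite W" and cone: "\<forall>w\<in>W. finite (cone w) \<and> card (cone w) \<le> K"
    and pg: "\<forall>g\<in>(\<Pi>\<^sub>E w\<in>W. cone w). measure_pmf.prob M {\<omega>. g ` W \<subseteq> S \<omega>} \<le> r"
    and E: "E \<subseteq> {\<omega>. \<forall>w\<in>W. \<exists>v\<in>cone w. v \<in> S \<omega>}"
    and r: "r \<ge> 0"
  shows "measure_pmf.prob M E \<le> real K ^ card W * r"
proof -
  let ?P = "\<Pi>\<^sub>E w\<in>W. cone w"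
  have E': "E \<subseteq> (\<Union>g\<in>?P. {\<omega>. g ` W \<subseteq> S \<omega>})"
  proof
    fix \<omega> assume "\<omega> \<in> E"
    then have "\<forall>w\<in>W. \<exists>v. v \<in> cone w \<and> v \<in> S \<omega>" using E by blast
    then obtain g0 where g0: "\<forall>w\<in>W. g0 w \<in> cone w \<and> g0 w \<in> S \<omega>" by metis
    have "restrict g0 W \<in> ?P" using g0 by auto
    moreover have "restrict g0 W ` W \<subseteq> S \<omega>" using g0 by auto
    ultimately show "\<omega> \<in> (\<Union>g\<in>?P. {\<omega>. g ` W \<subseteq> S \<omega>})" by blast
  qed
  have finP: "finite ?P" using W cone by (intro finite_PiE) auto
  have "measure_pmf.prob M E \<le> measure_pmf.prob M (\<Union>g\<in>?P. {\<omega>. g ` W \<subseteq> S \<omega>})"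
    by (rule measure_pmf.finite_measure_mono[OF E']) simp
  also have "\<dots> \<le> (\<Sum>g\<in>?P. measure_pmf.prob M {\<omega>. g ` W \<subseteq> S \<omega>})"
    by (rule measure_UNION_le[OF finP]) simp
  also have "\<dots> \<le> (\<Sum>g\<in>?P. r)" by (rule sum_mono) (use pg in auto)
  also have "\<dots> = real (card ?P) * r" by simp
  also have "real (card ?P) \<le> real K ^ card W"
  proof -
    have "card ?P = (\<Prod>w\<in>W. card (cone w))" by (rule card_PiE[OF W])
    also have "\<dots> \<le> (\<Prod>w\<in>W. K)" by (rule prod_mono) (use cone in auto)
    also have "\<dots> = K ^ card W" by simp
    finally show ?thesis by (simp flip: of_nat_power)
  qed
  then have "real (card ?P) * r \<le> real K ^ card W * r" using r by (rule mult_right_mono)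
  finally show ?thesis .
qed

lemma numeric_bound:
  fixes p :: real and D :: nat
  assumes D: "D \<ge> 1" and p: "0 \<le> p"
    and lt: "real D * (2 * p powr (2 powr (- (real D - 1)))) powr (1 / real D) < 1"
  defines "q \<equiv> p powr (2 powr (- (real D - 1)))"
  shows "0 \<le> q" "q \<le> 1" "q ^ (2 ^ (D - 1)) = p"
    "real D * 2 ^ (D - 1) * q \<le> real D * (2 * p powr (2 powr (- (real D - 1)))) powr (1 / real D)"
proof -
  define x where "x = (2 * q) powr (1 / real D)"
  show q0: "0 \<le> q" by (simp add: q_def)
  have x0: "0 \<le> x" by (simp add: x_def)
  have lt': "real D * x < 1" using lt by (simp add: x_def q_def)
  have Dpos: "real D \<ge> 1" using D by simp
  have xD: "x ^ D = 2 * q"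
  proof (cases "q = 0")
    case True then show ?thesis using D by (simp add: x_def)
  next
    case False
    then have "2 * q > 0" using q0 by simp
    then have "x ^ D = ((2 * q) powr (1 / real D)) powr real D" by (simp add: x_def powr_realpow)
    also have "\<dots> = 2 * q" using D q0 by (simp add: powr_powr)
    finally show ?thesis .
  qed
  have x1: "x < 1" using lt' Dpos x0
    by (smt (verit, best) mult_le_cancel_right1)
  have "2 * q < 1"
  proof -
    have "x ^ D \<le> x" using x0 x1 D by (simp add: power_le_one_iff power_decreasing[of 1 D x, simplified])
    then show ?thesis using xD x1 by simp
  qed
  then show "q \<le> 1" by simp
  show "q ^ (2 ^ (D - 1)) = p"
  proof (cases "p = 0")
    case True then show ?thesis by (simp add: q_def)
  next
    case False
    then have pp: "p > 0" using p by simp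
    have e: "2 powr (- (real D - 1)) * real (2 ^ (D - 1) :: nat) = 1"
    proof -
      have "2 powr (real D - 1) = 2 powr real (D - 1)" using D by (simp add: of_nat_diff)
      also have "\<dots> = 2 ^ (D - 1)" by (rule powr_realpow) simp
      finally have "real (2 ^ (D - 1) :: nat) = 2 powr (real D - 1)" by simp
      then show ?thesis by (simp add: powr_add[symmetric])
    qed
    have qp: "q > 0" using pp by (simp add: q_def)
    have "q ^ (2 ^ (D - 1)) = q powr real (2 ^ (D - 1) :: nat)"
      by (rule powr_realpow[OF qp, symmetric])
    also have "\<dots> = p" unfolding q_def powr_powr e using p by simp
    finally show ?thesis .
  qed
  have key: "2 ^ (D - 1) * q \<le> x"
  proof -
    have p2: "(2 * x) ^ (D - 1) \<le> 1"
    proof (cases "D = 1")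
      case True then show ?thesis by simp
    next
      case False
      then have "real D \<ge> 2" using D by simp
      then have "2 * x \<le> real D * x" using x0 by (simp add: mult_right_mono)
      then have "2 * x \<le> 1" using lt' by simp
      moreover have "0 \<le> 2 * x" using x0 by simp
      ultimately show ?thesis by (rule power_le_one[rotated])
    qed
    have "2 * (2 ^ (D - 1) * q) = 2 ^ (D - 1) * x ^ D" using xD by simp
    also have "x ^ D = x * x ^ (D - 1)" using D by (cases D) auto
    also have "2 ^ (D - 1) * (x * x ^ (D - 1)) = x * (2 * x) ^ (D - 1)" by (simp add: power_mult_distrib)
    also have "\<dots> \<le> x * 1" by (rule mult_left_mono[OF p2 x0])
    finally show ?thesis using x0 q0 by simp
  qed
  have "real D * 2 ^ (D - 1) * q = real D * (2 ^ (D - 1) * q)" by simp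
  also have "\<dots> \<le> real D * x" using key by (simp add: mult_left_mono)
  finally show "real D * 2 ^ (D - 1) * q \<le> real D * (2 * p powr (2 powr (- (real D - 1)))) powr (1 / real D)"
    by (simp add: x_def q_def)
qed

lemma fiber_card:
  assumes "finite W" "\<And>v. v \<in> g ` W \<Longrightarrow> card {w\<in>W. g w = v} \<le> B"
  shows "card W \<le> B * card (g ` W)"
proof -
  have eq: "W = (\<Union>v\<in>g ` W. {w\<in>W. g w = v})" by auto
  have "card W \<le> (\<Sum>v\<in>g ` W. card {w\<in>W. g w = v})"
    by (subst eq, rule card_UN_le) (use assms(1) in simp)
  also have "\<dots> \<le> card (g ` W) * B"
    using sum_bounded_above[of "g ` W" "\<lambda>v. card {w\<in>W. g w = v}" B] assms(2) by simp
  finally show ?thesis by (simp add: mult.commute)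
qed

theorem lemma5p1p2:
  fixes M :: "'\<omega> pmf" and D n :: nat and p :: real
    and C :: circuit and F :: "'\<omega> \<Rightarrow> noise"
  assumes "D \<ge> 1"
    and "0 \<le> p"
    and "clifford_circuit_12 D n C"
    and "local_stochastic M D n p F"
  shows "\<exists>F' :: '\<omega> \<Rightarrow> noise.
           local_stochastic M D n
             (real D * (2 * p powr (2 powr (- (real D - 1)))) powr (1 / real D)) F'
         \<and> (\<forall>\<omega>. supp D n (F' \<omega>) \<subseteq> {D} \<times> {0..<n})
         \<and> (\<forall>\<omega>. noisy_exec n C (F \<omega>) = noisy_exec n C (F' \<omega>))"
proof -
  have D1: "D \<ge> 1" by (rule assms(1))
  have vC: "\<forall>L\<in>set C. valid_layer n L" and lenC: "length C = D"
    using assms(3) by (auto simp: clifford_circuit_12_def)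
  have LS: "\<forall>\<omega>. pauli_noise D n (F \<omega>)"
    and PB: "\<forall>W \<subseteq> wires D n. measure_pmf.prob M {\<omega>. W \<subseteq> supp D n (F \<omega>)} \<le> p ^ card W"
    using assms(4) by (auto simp: local_stochastic_def)
  have Fp: "\<forall>t'. 1 \<le> t' \<and> t' < 1 + length C \<longrightarrow> (\<forall>j<n. F \<omega> (t', j) \<in> pauli1)" for \<omega>
    using LS lenC by (auto simp: pauli_noise_def wires_def)
  have ex: "\<forall>\<omega>. \<exists>A. (\<forall>j<n. A j \<in> pauli1) \<and> noisy_exec_aux n (F \<omega>) 1 C = ps n A * circ n C \<and>
     (\<forall>j<n. \<not> sc (A j) \<longrightarrow> (\<exists>t'. 1 \<le> t' \<and> t' < 1 + length C \<and>
        (\<exists>j'<n. \<not> sc (F \<omega> (t', j')) \<and> reach (drop (t' - 1 + 1) C) j' j)))"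
    using noisy_general[OF vC Fp] by blast
  obtain Af where Af: "\<forall>\<omega>. (\<forall>j<n. Af \<omega> j \<in> pauli1) \<and> noisy_exec_aux n (F \<omega>) 1 C = ps n (Af \<omega>) * circ n C \<and>
     (\<forall>j<n. \<not> sc (Af \<omega> j) \<longrightarrow> (\<exists>t'. 1 \<le> t' \<and> t' < 1 + length C \<and>
        (\<exists>j'<n. \<not> sc (F \<omega> (t', j')) \<and> reach (drop (t' - 1 + 1) C) j' j)))"
    using choice[OF ex] by blast
  define F' where "F' \<omega> = (\<lambda>(t, j). if t = D then Af \<omega> j else 1\<^sub>m 2)" for \<omega>
  have supp': "supp D n (F' \<omega>) \<subseteq> {D} \<times> {0..<n}" for \<omega>
  proof
    fix w assume w: "w \<in> supp D n (F' \<omega>)"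
    obtain t j where tj: "w = (t, j)" by (cases w)
    have "t \<in> {1..D}" "j < n" "\<not> (\<exists>c. F' \<omega> (t, j) = c \<cdot>\<^sub>m 1\<^sub>m 2)"
      using w tj by (auto simp: supp_def wires_def)
    moreover have "t = D"
    proof (rule ccontr)
      assume "t \<noteq> D"
      then have "F' \<omega> (t, j) = 1 \<cdot>\<^sub>m 1\<^sub>m 2" by (simp add: F'_def)
      then show False using calculation(3) by blast
    qed
    ultimately show "w \<in> {D} \<times> {0..<n}" using tj by simp
  qed
  have pn: "pauli_noise D n (F' \<omega>)" for \<omega>
    using Af by (auto simp: pauli_noise_def wires_def F'_def one_pauli1)
  have exec: "noisy_exec n C (F \<omega>) = noisy_exec n C (F' \<omega>)" for \<omega>
  proof -
    have Cne: "C \<noteq> []" using lenC D1 by auto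
    have "noisy_exec_aux n (F' \<omega>) 1 C = ps n (\<lambda>j. F' \<omega> (1 + length C - 1, j)) * circ n C"
      by (rule noisy_last[OF Cne]) (auto simp: F'_def lenC)
    also have "(\<lambda>j. F' \<omega> (1 + length C - 1, j)) = Af \<omega>" by (auto simp: F'_def lenC)
    finally show ?thesis using Af by (simp add: noisy_exec_def)
  qed
  have prob: "measure_pmf.prob M {\<omega>. W \<subseteq> supp D n (F' \<omega>)}
      \<le> (real D * (2 * p powr (2 powr (- (real D - 1)))) powr (1 / real D)) ^ card W"
    if W: "W \<subseteq> wires D n" for W
  proof (cases "real D * (2 * p powr (2 powr (- (real D - 1)))) powr (1 / real D) < 1")
    case False
    have "measure_pmf.prob M {\<omega>. W \<subseteq> supp D n (F' \<omega>)} \<le> 1" by (rule measure_pmf.prob_le_1)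
    also have "1 \<le> (real D * (2 * p powr (2 powr (- (real D - 1)))) powr (1 / real D)) ^ card W"
      using False by (intro one_le_power) simp
    finally show ?thesis .
  next
    case True
    define q where "q = p powr (2 powr (- (real D - 1)))"
    have q: "0 \<le> q" "q \<le> 1" "q ^ (2 ^ (D - 1)) = p"
      "real D * 2 ^ (D - 1) * q \<le> real D * (2 * p powr (2 powr (- (real D - 1)))) powr (1 / real D)"
      using numeric_bound[OF D1 assms(2) True] unfolding q_def by auto
    show ?thesis
    proof (cases "W \<subseteq> {D} \<times> {0..<n}")
      case False
      then have "{\<omega>. W \<subseteq> supp D n (F' \<omega>)} = {}" using supp' by blast
      then show ?thesis by simp
    next
      case True
      note WD = True
      have finW: "finite W" using W finite_subset[of W "wires D n"] by (simp add: wires_def)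
      define cone where "cone w = {(t', j'). 1 \<le> t' \<and> t' \<le> D \<and> j' < n \<and> reach (drop t' C) j' (snd w)}"
        for w :: "nat \<times> nat"
      have cone_w: "cone w \<subseteq> wires D n" for w by (auto simp: cone_def wires_def)
      have vdrop: "\<forall>L\<in>set (drop t' C). valid_layer n L" for t' using vC by (meson in_set_dropD)
      have bw: "card {j'. reach (drop t' C) j' j} \<le> 2 ^ (D - 1)" "finite {j'. reach (drop t' C) j' j}"
        if "1 \<le> t'" for t' j
      proof -
        have "card {j'. reach (drop t' C) j' j} \<le> 2 ^ length (drop t' C)" using reach_bwd[OF vdrop] by blast
        also have "\<dots> \<le> 2 ^ (D - 1)" using that lenC by (intro power_increasing) auto
        finally show "card {j'. reach (drop t' C) j' j} \<le> 2 ^ (D - 1)" .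
        show "finite {j'. reach (drop t' C) j' j}" using reach_bwd[OF vdrop] by blast
      qed
      have fw: "card {j. reach (drop t' C) j' j} \<le> 2 ^ (D - 1)" "finite {j. reach (drop t' C) j' j}"
        if "1 \<le> t'" for t' j'
      proof -
        have "card {j. reach (drop t' C) j' j} \<le> 2 ^ length (drop t' C)" using reach_fwd[OF vdrop] by blast
        also have "\<dots> \<le> 2 ^ (D - 1)" using that lenC by (intro power_increasing) auto
        finally show "card {j. reach (drop t' C) j' j} \<le> 2 ^ (D - 1)" .
        show "finite {j. reach (drop t' C) j' j}" using reach_fwd[OF vdrop] by blast
      qed
      have cone_card: "finite (cone w) \<and> card (cone w) \<le> D * 2 ^ (D - 1)" for w
      proof -
        have fin: "finite (cone w)" using cone_w finite_subset[of "cone w" "wires D n"] by (simp add: wires_def)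
        have sub: "cone w \<subseteq> (\<Union>t'\<in>{1..D}. {t'} \<times> {j'. reach (drop t' C) j' (snd w)})"
          by (auto simp: cone_def)
        have "card (cone w) \<le> card (\<Union>t'\<in>{1..D}. {t'} \<times> {j'. reach (drop t' C) j' (snd w)})"
          by (rule card_mono[OF _ sub]) (use bw in auto)
        also have "\<dots> \<le> (\<Sum>t'\<in>{1..D}. card ({t'} \<times> {j'. reach (drop t' C) j' (snd w)}))"
          by (rule card_UN_le) simp
        also have "\<dots> \<le> card {1..D} * 2 ^ (D - 1)"
          using sum_bounded_above[of "{1..D}" "\<lambda>t'. card ({t'} \<times> {j'. reach (drop t' C) j' (snd w)})" "2 ^ (D - 1)"]
            bw by (simp add: card_cartesian_product_singleton)
        finally show ?thesis using fin by simp
      qed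
      have pg: "\<forall>g\<in>(\<Pi>\<^sub>E w\<in>W. cone w). measure_pmf.prob M {\<omega>. g ` W \<subseteq> supp D n (F \<omega>)} \<le> q ^ card W"
      proof
        fix g assume g: "g \<in> (\<Pi>\<^sub>E w\<in>W. cone w)"
        have gW: "g ` W \<subseteq> wires D n" using g cone_w by blast
        have cW: "card W \<le> 2 ^ (D - 1) * card (g ` W)"
        proof (rule fiber_card[OF finW])
          fix v assume "v \<in> g ` W"
          then obtain w0 where w0: "w0 \<in> W" "v = g w0" by blast
          then have "v \<in> cone w0" using g by auto
          then obtain t' j' where v: "v = (t', j')" "1 \<le> t'" by (auto simp: cone_def)
          have "{w\<in>W. g w = v} \<subseteq> (\<lambda>j. (D, j)) ` {j. reach (drop t' C) j' j}"
          proof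
            fix w assume w: "w \<in> {w\<in>W. g w = v}"
            then have "g w \<in> cone w" using g by auto
            then have "reach (drop t' C) j' (snd w)" using w v by (auto simp: cone_def)
            moreover have "w = (D, snd w)" using w WD by auto
            ultimately show "w \<in> (\<lambda>j. (D, j)) ` {j. reach (drop t' C) j' j}" by blast
          qed
          then have "card {w\<in>W. g w = v} \<le> card ((\<lambda>j. (D, j)) ` {j. reach (drop t' C) j' j})"
            by (rule card_mono[rotated]) (use fw[OF v(2)] in simp)
          also have "\<dots> \<le> card {j. reach (drop t' C) j' j}" by (rule card_image_le) (use fw[OF v(2)] in simp)
          also have "\<dots> \<le> 2 ^ (D - 1)" by (rule fw[OF v(2)])
          finally show "card {w\<in>W. g w = v} \<le> 2 ^ (D - 1)" .
        qed
        have "measure_pmf.prob M {\<omega>. g ` W \<subseteq> supp D n (F \<omega>)} \<le> p ^ card (g ` W)" using PB gW by blast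
        also have "p ^ card (g ` W) = q ^ (2 ^ (D - 1) * card (g ` W))" by (simp add: q(3)[symmetric] power_mult)
        also have "\<dots> \<le> q ^ card W" by (rule power_decreasing[OF cW q(1) q(2)])
        finally show "measure_pmf.prob M {\<omega>. g ` W \<subseteq> supp D n (F \<omega>)} \<le> q ^ card W" .
      qed
      have E: "{\<omega>. W \<subseteq> supp D n (F' \<omega>)} \<subseteq> {\<omega>. \<forall>w\<in>W. \<exists>v\<in>cone w. v \<in> supp D n (F \<omega>)}"
      proof (intro subsetI CollectI ballI)
        fix \<omega> w assume \<omega>: "\<omega> \<in> {\<omega>. W \<subseteq> supp D n (F' \<omega>)}" and w: "w \<in> W"
        obtain j where wj: "w = (D, j)" "j < n" using w WD by auto
        have "w \<in> supp D n (F' \<omega>)" using \<omega> w by auto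
        then have "\<not> sc (Af \<omega> j)" using wj by (auto simp: supp_def sc_def F'_def)
        then obtain t' j' where tj: "1 \<le> t'" "t' < 1 + length C" "j' < n" "\<not> sc (F \<omega> (t', j'))"
          "reach (drop (t' - 1 + 1) C) j' j" using Af wj(2) by blast
        have "(t', j') \<in> cone w" using tj wj lenC by (auto simp: cone_def)
        moreover have "(t', j') \<in> supp D n (F \<omega>)" using tj lenC by (auto simp: supp_def sc_def wires_def)
        ultimately show "\<exists>v\<in>cone w. v \<in> supp D n (F \<omega>)" by blast
      qed
      have "measure_pmf.prob M {\<omega>. W \<subseteq> supp D n (F' \<omega>)} \<le> real (D * 2 ^ (D - 1)) ^ card W * q ^ card W"
        by (rule union_bound_cone[OF finW _ pg E]) (use cone_card q(1) in auto)
      also have "\<dots> = (real D * 2 ^ (D - 1) * q) ^ card W" by (simp add: power_mult_distrib)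
      also have "\<dots> \<le> (real D * (2 * p powr (2 powr (- (real D - 1)))) powr (1 / real D)) ^ card W"
        by (rule power_mono[OF q(4)]) (use q(1) in simp)
      finally show ?thesis .
    qed
  qed
  show ?thesis
    by (rule exI[of _ F']) (use pn prob supp' exec in \<open>auto simp: local_stochastic_def\<close>)
qed

end
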